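(* Let $\Theta$ be an $N$-tuple of pairwise commuting symmetric positive definite $n\times n$ matrices and $G\in\mathcal{G}_\Theta$, and let $Y_{e^t}=\lim_{M_1\to\infty}\cdots\lim_{M_N\to\infty}\sum_{j_1=-M_1}^{t_1}\cdots\sum_{j_N=-M_N}^{t_N}e^{j\ast\Theta}\Delta_jG$. Then for every $t\in\mathbb{Z}^N$, $\sum_{j_1=-M_1}^{t_1}\cdots\sum_{j_N=-M_N}^{t_N}e^{j\ast\Theta}\Delta_jG\to Y_{e^t}$ in probability regardless of how $M=(M_1,\dots,M_N)$ tends to infinity (i.e. for every order of iterated limits and as the joint limit $\min_lM_l\to\infty$), with the same limit.
   Context: For $t\in\mathbb{Z}^N$ and an $N$-tuple $\Theta$ of $n\times n$ matrices, $t\ast\Theta=\sum_{j=1}^N t_j\Theta_j$. For a field $Z=(Z_t)_{t\in\mathbb{Z}^N}$, $\Delta_t Z=\sum_{i\in\{0,1\}^N}(-1)^{i_1+\dots+i_N}Z_{t_1-i_1,\dots,t_N-i_N}$. Equality in law of fields means equality of all finite-dimensional distributions. $G$ is a stationary increment field if $(\Delta_{t+s}G)_{t}$ and $(\Delta_tG)_{t}$ are equal in law for every $s\in\mathbb{Z}^N$. $\mathcal{G}_\Theta$ is the class of stationary increment fields $G$ such that the iterated limit $\lim_{M_1\to\infty}\cdots\lim_{M_N\to\infty}\sum_{j_1=-M_1}^{t_1}\cdots\sum_{j_N=-M_N}^{t_N}e^{j\ast\Theta}\Delta_jG$ converges in probability for every $t\in\mathbb{Z}^N$. *)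

theory Defs
  imports "HOL-Probability.Probability"
begin

primrec mpow :: "real^'n^'n \<Rightarrow> nat \<Rightarrow> real^'n^'n" where
  "mpow A 0 = mat 1"
| "mpow A (Suc k) = A ** mpow A k"

definition mexp :: "real^'n^'n \<Rightarrow> real^'n^'n" where
  "mexp A = (\<Sum>k. (1 / fact k) *\<^sub>R mpow A k)"

definition sym_posdef :: "real^'n^'n \<Rightarrow> bool" where
  "sym_posdef A \<longleftrightarrow> transpose A = A \<and> (\<forall>x. x \<noteq> 0 \<longrightarrow> 0 < x \<bullet> (A *v x))"

definition ZN :: "nat \<Rightarrow> (nat \<Rightarrow> int) set" where
  "ZN N = {t. \<forall>l\<ge>N. t l = 0}"

definition bits :: "nat \<Rightarrow> (nat \<Rightarrow> int) set" where
  "bits N = {i. (\<forall>l<N. i l \<in> {0,1}) \<and> (\<forall>l\<ge>N. i l = 0)}"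

definition tstar :: "nat \<Rightarrow> (nat \<Rightarrow> int) \<Rightarrow> (nat \<Rightarrow> real^'n^'n) \<Rightarrow> real^'n^'n" where
  "tstar N t \<Theta> = (\<Sum>l<N. of_int (t l) *\<^sub>R \<Theta> l)"

definition incr :: "nat \<Rightarrow> ((nat \<Rightarrow> int) \<Rightarrow> 'a \<Rightarrow> 'b::real_vector) \<Rightarrow> (nat \<Rightarrow> int) \<Rightarrow> 'a \<Rightarrow> 'b" where
  "incr N Z t \<omega> = (\<Sum>i\<in>bits N. ((-1::real) ^ (\<Sum>l<N. nat (i l))) *\<^sub>R Z (\<lambda>l. t l - i l) \<omega>)"

definition stationary_incr :: "'a measure \<Rightarrow> nat \<Rightarrow> ((nat \<Rightarrow> int) \<Rightarrow> 'a \<Rightarrow> 'b::{real_vector,topological_space}) \<Rightarrow> bool" where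
  "stationary_incr P N G \<longleftrightarrow>
     (\<forall>s\<in>ZN N. \<forall>T. finite T \<and> T \<subseteq> ZN N \<longrightarrow>
        distr P (PiM T (\<lambda>_. borel)) (\<lambda>\<omega>. \<lambda>t\<in>T. incr N G (\<lambda>l. t l + s l) \<omega>)
      = distr P (PiM T (\<lambda>_. borel)) (\<lambda>\<omega>. \<lambda>t\<in>T. incr N G t \<omega>))"

definition conv_prob :: "'a measure \<Rightarrow> ('i \<Rightarrow> 'a \<Rightarrow> 'b::metric_space) \<Rightarrow> ('a \<Rightarrow> 'b) \<Rightarrow> 'i filter \<Rightarrow> bool" where
  "conv_prob P X Y F \<longleftrightarrow>
     (\<forall>x. X x \<in> borel_measurable P) \<and> Y \<in> borel_measurable P \<and>
     (\<forall>\<epsilon>>0. ((\<lambda>x. measure P {\<omega>\<in>space P. \<epsilon> < dist (X x \<omega>) (Y \<omega>)}) \<longlongrightarrow> 0) F)"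

text \<open>Iterated limit in probability of a family S M (M = (M_0,...)) with respect to an order of
  the coordinates; the list is given innermost limit first.  ilim P [l_k,...,l_1] S Y means
  lim_{M_{l_1}} ... lim_{M_{l_k}} S M = Y in probability.\<close>
primrec ilim :: "'a measure \<Rightarrow> nat list \<Rightarrow> ((nat \<Rightarrow> int) \<Rightarrow> 'a \<Rightarrow> 'b::metric_space) \<Rightarrow> ('a \<Rightarrow> 'b) \<Rightarrow> bool" where
  "ilim P [] S Y \<longleftrightarrow> (\<forall>M. S M = Y)"
| "ilim P (l # ls) S Y \<longleftrightarrow>
     (\<exists>T. (\<forall>M. conv_prob P (\<lambda>m::int. S (M(l := m))) (T M) at_top) \<and> ilim P ls T Y)"

definition joint_at_top :: "nat \<Rightarrow> (nat \<Rightarrow> int) filter" where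
  "joint_at_top N = (INF K::int. principal {M. \<forall>l<N. K \<le> M l})"

definition box :: "nat \<Rightarrow> (nat \<Rightarrow> int) \<Rightarrow> (nat \<Rightarrow> int) \<Rightarrow> (nat \<Rightarrow> int) set" where
  "box N t M = {j. (\<forall>l<N. - M l \<le> j l \<and> j l \<le> t l) \<and> (\<forall>l\<ge>N. j l = 0)}"

definition psum :: "nat \<Rightarrow> (nat \<Rightarrow> real^'n^'n) \<Rightarrow> ((nat \<Rightarrow> int) \<Rightarrow> 'a \<Rightarrow> real^'n)
    \<Rightarrow> (nat \<Rightarrow> int) \<Rightarrow> (nat \<Rightarrow> int) \<Rightarrow> 'a \<Rightarrow> real^'n" where
  "psum N \<Theta> G t M \<omega> = (\<Sum>j\<in>box N t M. mexp (tstar N j \<Theta>) *v incr N G j \<omega>)"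

text \<open>The class G_Theta (with the paper's order: M_1 outermost, ..., M_N innermost).\<close>
definition GTheta :: "'a measure \<Rightarrow> nat \<Rightarrow> (nat \<Rightarrow> real^'n^'n) \<Rightarrow> ((nat \<Rightarrow> int) \<Rightarrow> 'a \<Rightarrow> real^'n) set" where
  "GTheta P N \<Theta> = {G. (\<forall>t\<in>ZN N. G t \<in> borel_measurable P) \<and> stationary_incr P N G \<and>
      (\<forall>t\<in>ZN N. \<exists>Y. ilim P (rev [0..<N]) (psum N \<Theta> G t) Y)}"

end

theory Submission
  imports Defs
begin

typedef (overloaded) 'n op = "UNIV :: ((real^'n::finite) \<Rightarrow>\<^sub>L (real^'n)) set"
  morphisms rep_op abs_op by simp

setup_lifting type_definition_op

instantiation op :: (finite) real_normed_vector
begin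
lift_definition norm_op :: "'a op \<Rightarrow> real" is norm .
lift_definition minus_op :: "'a op \<Rightarrow> 'a op \<Rightarrow> 'a op" is "(-)" .
lift_definition plus_op :: "'a op \<Rightarrow> 'a op \<Rightarrow> 'a op" is "(+)" .
lift_definition uminus_op :: "'a op \<Rightarrow> 'a op" is "uminus" .
lift_definition zero_op :: "'a op" is "0" .
lift_definition scaleR_op :: "real \<Rightarrow> 'a op \<Rightarrow> 'a op" is "scaleR" .
definition dist_op :: "'a op \<Rightarrow> 'a op \<Rightarrow> real" where "dist_op a b = norm (a - b)"
definition sgn_op :: "'a op \<Rightarrow> 'a op" where "sgn_op x = scaleR (inverse (norm x)) x"
definition uniformity_op :: "('a op \<times> 'a op) filter" where
  "uniformity_op = (INF e\<in>{0 <..}. principal {(x, y). dist x y < e})"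
definition open_op :: "'a op set \<Rightarrow> bool"
  where "open_op S = (\<forall>x\<in>S. \<forall>\<^sub>F (x', y) in uniformity. x' = x \<longrightarrow> y \<in> S)"
instance
  apply standard
  unfolding dist_op_def open_op_def sgn_op_def uniformity_op_def
  apply (rule refl | (transfer, force simp: norm_triangle_ineq algebra_simps))+
  done
end

instantiation op :: (finite) real_normed_algebra_1
begin
lift_definition times_op :: "'a op \<Rightarrow> 'a op \<Rightarrow> 'a op" is "(o\<^sub>L)" .
lift_definition one_op :: "'a op" is "id_blinfun" .
instance
proof
  fix a b c :: "'a op" and r :: real
  show "a * b * c = a * (b * c)" by transfer (rule blinfun_eqI, simp add: blinfun.bilinear_simps)
  show "(a + b) * c = a * c + b * c" by transfer (rule blinfun_eqI, simp add: blinfun.bilinear_simps)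
  show "a * (b + c) = a * b + a * c" by transfer (rule blinfun_eqI, simp add: blinfun.bilinear_simps)
  show "r *\<^sub>R a * b = r *\<^sub>R (a * b)" by transfer (rule blinfun_eqI, simp add: blinfun.bilinear_simps)
  show "a * r *\<^sub>R b = r *\<^sub>R (a * b)" by transfer (rule blinfun_eqI, simp add: blinfun.bilinear_simps)
  show "1 * a = a" by transfer (rule blinfun_eqI, simp add: blinfun.bilinear_simps)
  show "a * 1 = a" by transfer (rule blinfun_eqI, simp add: blinfun.bilinear_simps)
  show "norm (a * b) \<le> norm a * norm b" by transfer (rule norm_blinfun_compose)
  show "norm (1::'a op) = 1" by transfer simp
  show "(0::'a op) \<noteq> 1"
  proof
    assume "(0::'a op) = 1"
    then have "norm (0::'a op) = norm (1::'a op)" by simp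
    then show False using \<open>norm (1::'a op) = 1\<close> by simp
  qed
qed
end

instance op :: (finite) banach
proof
  fix X :: "nat \<Rightarrow> 'a op" assume "Cauchy X"
  then have "Cauchy (\<lambda>n. rep_op (X n))"
    unfolding Cauchy_def dist_norm by transfer
  then obtain L where "(\<lambda>n. rep_op (X n)) \<longlonglongrightarrow> L" using Cauchy_convergent convergent_def by blast
  then have "X \<longlonglongrightarrow> abs_op L"
    unfolding tendsto_iff dist_norm by transfer
  then show "convergent X" by (auto simp: convergent_def)
qed


definition phi :: "real^'n^'n \<Rightarrow> 'n::finite op" where
  "phi A = abs_op (Blinfun (\<lambda>x. A *v x))"

definition psi :: "'n::finite op \<Rightarrow> real^'n^'n" where
  "psi X = matrix (blinfun_apply (rep_op X))"

lemma rep_phi: "blinfun_apply (rep_op (phi A)) x = A *v x"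
  unfolding phi_def by (simp add: abs_op_inverse bounded_linear_Blinfun_apply)

lemma psi_mult_vec: "psi X *v x = blinfun_apply (rep_op X) x"
proof -
  have "(\<lambda>y. matrix (blinfun_apply (rep_op X)) *v y) = blinfun_apply (rep_op X)"
    by (rule matrix_vector_mul(3)) (rule blinfun.bounded_linear_right)
  then show ?thesis unfolding psi_def by (rule fun_cong)
qed

lemma psi_phi: "psi (phi A) = A"
  proof -
  have "blinfun_apply (rep_op (phi A)) = (\<lambda>x. A *v x)" by (rule ext, rule rep_phi)
  then show ?thesis unfolding psi_def by simp
qed

lemma phi_inj: "phi A = phi B \<Longrightarrow> A = B"
  by (metis psi_phi)

lemma phi_mult: "phi (A ** B) = phi A * phi B"
  by (rule rep_op_inject[THEN iffD1], rule blinfun_eqI)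
     (simp add: rep_phi times_op.rep_eq matrix_vector_mul_assoc)

lemma phi_one: "phi (mat 1) = 1"
  by (rule rep_op_inject[THEN iffD1], rule blinfun_eqI) (simp add: rep_phi one_op.rep_eq)

lemma phi_add: "phi (A + B) = phi A + phi B"
  by (rule rep_op_inject[THEN iffD1], rule blinfun_eqI)
     (simp add: rep_phi plus_op.rep_eq matrix_vector_mult_add_rdistrib blinfun.bilinear_simps)

lemma phi_scaleR: "phi (r *\<^sub>R A) = r *\<^sub>R phi A"
  by (rule rep_op_inject[THEN iffD1], rule blinfun_eqI)
     (simp add: rep_phi scaleR_op.rep_eq scaleR_matrix_vector_assoc blinfun.bilinear_simps)

lemma phi_zero: "phi 0 = 0"
  using phi_scaleR[of 0 0] by simp

lemma phi_sum: "phi (\<Sum>i\<in>S. f i) = (\<Sum>i\<in>S. phi (f i))"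
  by (induction S rule: infinite_finite_induct) (auto simp: phi_zero phi_add)

lemma phi_mpow: "phi (mpow A k) = phi A ^ k"
  by (induction k) (auto simp: phi_one phi_mult)

lemma psi_add: "psi (X + Y) = psi X + psi Y"
  by (rule matrix_eq[THEN iffD2], simp add: psi_mult_vec matrix_vector_mult_add_rdistrib plus_op.rep_eq blinfun.bilinear_simps)

lemma psi_scaleR: "psi (r *\<^sub>R X) = r *\<^sub>R psi X"
  by (rule matrix_eq[THEN iffD2], simp add: psi_mult_vec scaleR_op.rep_eq scaleR_matrix_vector_assoc[symmetric] blinfun.bilinear_simps)

lemma psi_mult: "psi (X * Y) = psi X ** psi Y"
  by (rule matrix_eq[THEN iffD2], simp add: psi_mult_vec times_op.rep_eq matrix_vector_mul_assoc[symmetric])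

lemma psi_norm: "norm (psi X) \<le> real CARD('n) * real CARD('n) * norm (X::'n::finite op)"
proof -
  have c: "\<bar>psi X $ i $ j\<bar> \<le> norm X" for i j
  proof -
    have "psi X $ i $ j = blinfun_apply (rep_op X) (axis j 1) $ i"
      unfolding psi_def matrix_def by simp
    also have "\<bar>\<dots>\<bar> \<le> norm (blinfun_apply (rep_op X) (axis j 1))" by (rule component_le_norm_cart)
    also have "\<dots> \<le> norm (rep_op X) * norm (axis j (1::real))" by (rule norm_blinfun)
    also have "\<dots> = norm X" by (simp add: norm_op.rep_eq)
    finally show ?thesis .
  qed
  have r: "norm (psi X $ i) \<le> real CARD('n) * norm X" for i
  proof -
    have "norm (psi X $ i) \<le> (\<Sum>j\<in>UNIV. \<bar>psi X $ i $ j\<bar>)" by (rule norm_le_l1_cart)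
    also have "\<dots> \<le> (\<Sum>j\<in>(UNIV::'n set). norm X)" by (rule sum_mono, rule c)
    also have "\<dots> = real CARD('n) * norm X" by (simp only: sum_constant)
    finally show ?thesis .
  qed
  have "norm (psi X) \<le> (\<Sum>i\<in>UNIV. norm (psi X $ i))" by (simp add: norm_vec_def L2_set_le_sum)
  also have "\<dots> \<le> (\<Sum>i\<in>(UNIV::'n set). real CARD('n) * norm X)" by (rule sum_mono, rule r)
  also have "\<dots> = real CARD('n) * real CARD('n) * norm X" by (simp only: sum_constant mult.assoc)
  finally show ?thesis .
qed

lemma psi_bl: "bounded_linear (psi :: 'n::finite op \<Rightarrow> _)"
  by (rule bounded_linear_intro[where K="real CARD('n) * real CARD('n)"])
     (auto simp: psi_add psi_scaleR psi_norm mult.commute[of "norm _"])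

lemma mexp_psi: "mexp A = psi (exp (phi A))"
proof -
  have "exp (phi A) = (\<Sum>n. (phi A)^n /\<^sub>R fact n)" by (simp add: exp_def)
  then have "psi (exp (phi A)) = (\<Sum>n. psi ((phi A)^n /\<^sub>R fact n))"
    using bounded_linear.suminf[OF psi_bl summable_exp_generic] by simp
  also have "\<dots> = (\<Sum>n. (1 / fact n) *\<^sub>R mpow A n)"
    by (simp add: psi_scaleR phi_mpow[symmetric] psi_phi divide_inverse)
  finally show ?thesis by (simp add: mexp_def)
qed

lemma mexp_vec: "mexp A *v x = blinfun_apply (rep_op (exp (phi A))) x"
  by (simp add: mexp_psi psi_mult_vec)

lemma mexp_add: "phi A * phi B = phi B * phi A \<Longrightarrow> mexp (A + B) = mexp A ** mexp B"
  by (simp add: mexp_psi phi_add exp_add_commuting psi_mult)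

lemma exp_nat_mult: "exp (of_nat n * (x::'a::{real_normed_algebra_1,banach})) = exp x ^ n"
proof (induction n)
  case (Suc n)
  have "x * (of_nat n * x) = x * (x * of_nat n)" by (simp only: mult_of_nat_commute)
  also have "\<dots> = (x * x) * of_nat n" by (simp only: mult.assoc)
  also have "\<dots> = of_nat n * (x * x)" by (simp only: mult_of_nat_commute)
  also have "\<dots> = (of_nat n * x) * x" by (simp only: mult.assoc)
  finally have "x * (of_nat n * x) = (of_nat n * x) * x" .
  then have "exp (x + of_nat n * x) = exp x * exp (of_nat n * x)" by (rule exp_add_commuting)
  then show ?case using Suc by (simp add: distrib_right)
qed simp


lemma posdef_lower:
  fixes \<Theta> :: "real^'n::finite^'n"
  assumes "sym_posdef \<Theta>"
  shows "\<exists>lam>0. \<forall>x. lam * (norm x)^2 \<le> x \<bullet> (\<Theta> *v x)"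
proof -
  let ?S = "sphere (0::real^'n) 1"
  have ne: "?S \<noteq> {}" using norm_axis_1[of undefined] by (metis dist_0_norm mem_sphere empty_iff)
  have "continuous_on ?S (\<lambda>x. x \<bullet> (\<Theta> *v x))"
    by (intro continuous_intros continuous_on_compose2[OF bounded_linear.continuous_on[OF matrix_vector_mul_bounded_linear]]) auto
  then obtain x0 where x0: "x0 \<in> ?S" "\<And>y. y \<in> ?S \<Longrightarrow> x0 \<bullet> (\<Theta> *v x0) \<le> y \<bullet> (\<Theta> *v y)"
    using continuous_attains_inf[OF compact_sphere ne] by blast
  have "x0 \<noteq> 0" using x0(1) by auto
  then have pos: "0 < x0 \<bullet> (\<Theta> *v x0)"
    using assms unfolding sym_posdef_def by blast
  show ?thesis
  proof (intro exI conjI allI)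
    fix x :: "real^'n"
    show "(x0 \<bullet> (\<Theta> *v x0)) * (norm x)^2 \<le> x \<bullet> (\<Theta> *v x)"
    proof (cases "x = 0")
      case False
      define y where "y = (1 / norm x) *\<^sub>R x"
      have "y \<in> ?S" using False by (simp add: y_def)
      then have "x0 \<bullet> (\<Theta> *v x0) \<le> y \<bullet> (\<Theta> *v y)" by (rule x0(2))
      also have "y \<bullet> (\<Theta> *v y) = (x \<bullet> (\<Theta> *v x)) / (norm x)^2"
        by (simp add: y_def matrix_vector_mult_scaleR power2_eq_square)
      finally have "x0 \<bullet> (\<Theta> *v x0) \<le> (x \<bullet> (\<Theta> *v x)) / (norm x)^2" .
      moreover have "0 < (norm x)^2" using False by simp
      ultimately show ?thesis by (simp add: pos_le_divide_eq)
    qed simp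
  qed (fact pos)
qed

lemma exp_remainder:
  fixes z :: "'a::{real_normed_algebra_1,banach}"
  shows "norm (exp z - 1 - z) \<le> (norm z)^2 * exp (norm z)"
proof -
  define f where "f n = z^n /\<^sub>R fact n" for n
  have sf: "summable f" unfolding f_def by (rule summable_exp_generic)
  have "exp z = (\<Sum>n. f (n + 2)) + (\<Sum>i<2. f i)"
    unfolding exp_def f_def[symmetric] by (rule suminf_split_initial_segment[OF sf])
  then have eq: "exp z - 1 - z = (\<Sum>n. f (n + 2))"
    by (simp add: f_def numeral_2_eq_2)
  have sn: "summable (\<lambda>n. norm (f n))" unfolding f_def by (rule summable_norm_exp)
  then have sn2: "summable (\<lambda>n. norm (f (n + 2)))" by (subst summable_iff_shift) 
  have se: "summable (\<lambda>n. (norm z)^2 * ((norm z)^n /\<^sub>R fact n))"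
    by (intro summable_mult summable_exp_generic)
  have le: "norm (f (n + 2)) \<le> (norm z)^2 * ((norm z)^n /\<^sub>R fact n)" for n
  proof -
    have g: "norm (z^m /\<^sub>R fact m) = norm (z^m) / fact m" for m
      by (simp add: divide_inverse mult.commute)
    have "norm (f (n+2)) = norm (z^(n+2)) / fact (n+2)" by (simp only: f_def g)
    also have "\<dots> \<le> (norm z)^(n+2) / fact (n+2)"
      by (rule divide_right_mono[OF norm_power_ineq]) simp
    also have "\<dots> \<le> (norm z)^(n+2) / fact n"
    proof (rule divide_left_mono)
      show "fact n \<le> (fact (n+2)::real)" by (rule fact_mono) simp
    qed auto
    also have "\<dots> = (norm z)^2 * ((norm z)^n /\<^sub>R fact n)"
      by (simp add: power_add divide_inverse power2_eq_square)
    finally show ?thesis .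
  qed
  have "norm (exp z - 1 - z) \<le> (\<Sum>n. norm (f (n + 2)))"
    unfolding eq by (rule summable_norm[OF sn2])
  also have "\<dots> \<le> (\<Sum>n. (norm z)^2 * ((norm z)^n /\<^sub>R fact n))"
    by (rule suminf_le[OF le sn2 se])
  also have "\<dots> = (norm z)^2 * exp (norm z)"
    by (simp only: suminf_mult[OF summable_exp_generic] exp_def)
  finally show ?thesis .
qed

lemma norm_rep_phi: "norm (A *v x) \<le> norm (phi A) * norm x"
  using norm_blinfun[of "rep_op (phi A)" x] by (simp add: rep_phi norm_op.rep_eq)

lemma rep_times: "blinfun_apply (rep_op (X * Y)) x = blinfun_apply (rep_op X) (blinfun_apply (rep_op Y) x)"
  by (simp add: times_op.rep_eq)

lemma rep_pow_bound:
  assumes "0 \<le> q" "\<And>x. norm (blinfun_apply (rep_op E) x) \<le> q * norm x"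
  shows "norm (blinfun_apply (rep_op (E ^ m)) x) \<le> q^m * norm x"
proof (induction m arbitrary: x)
  case 0 then show ?case by (simp add: one_op.rep_eq)
next
  case (Suc m)
  have "norm (blinfun_apply (rep_op (E ^ Suc m)) x) = norm (blinfun_apply (rep_op E) (blinfun_apply (rep_op (E^m)) x))"
    by (simp add: rep_times)
  also have "\<dots> \<le> q * norm (blinfun_apply (rep_op (E^m)) x)" by (rule assms(2))
  also have "\<dots> \<le> q * (q^m * norm x)" by (rule mult_left_mono[OF Suc assms(1)])
  finally show ?case by simp
qed


lemma phi_neg: "phi (- A) = - phi A"
  using phi_scaleR[of "-1" A] by simp

lemma decay1:
  fixes \<Theta> :: "real^'n::finite^'n"
  assumes "sym_posdef \<Theta>"
  shows "\<exists>q\<ge>0. q < 1 \<and> (\<forall>(c::nat) x. norm (mexp ((- real c) *\<^sub>R \<Theta>) *v x) \<le> q^c * norm x)"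
proof -
  obtain lam where lam: "lam > 0" "\<And>x. lam * (norm x)^2 \<le> x \<bullet> (\<Theta> *v x)"
    using posdef_lower[OF assms] by blast
  define Z where "Z = phi \<Theta>"
  define z where "z = norm Z"
  have z0: "0 \<le> z" by (simp add: z_def)
  have Zb: "norm (\<Theta> *v x) \<le> z * norm x" for x
    using norm_rep_phi by (simp add: z_def Z_def)
  define C where "C = z^2 / 2 + z^2 * exp z"
  have C0: "0 \<le> C" by (simp add: C_def z0)
  obtain k :: nat where k: "real k \<ge> 1 + lam + 2 * C / lam" using real_arch_simple by blast
  have kpos: "real k > 0" using k lam C0 by (smt (verit) divide_nonneg_pos)
  define h where "h = 1 / real k"
  have h0: "0 < h" and h1: "h \<le> 1" using kpos k lam C0 by (auto simp: h_def divide_nonneg_pos)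
  have hlam: "h * lam \<le> 1"
  proof -
    have "lam \<le> real k" using k lam C0 by (smt (verit) divide_nonneg_pos)
    then show ?thesis using kpos by (simp add: h_def)
  qed
  have hC: "h * C \<le> lam / 2"
  proof -
    have "2 * C / lam \<le> real k" using k lam by linarith
    then have "2 * C \<le> real k * lam" using lam by (simp add: divide_le_eq)
    then show ?thesis using kpos by (simp add: h_def field_simps)
  qed
  define q where "q = 1 - h * lam / 2"
  have q0: "0 \<le> q" and q1: "q < 1" using hlam h0 lam by (auto simp: q_def)
  define w where "w = - (h *\<^sub>R Z)"
  define E where "E = exp w"
  have nw: "norm w = h * z" using h0 by (simp add: w_def z_def)
  have Ebound: "norm (blinfun_apply (rep_op E) x) \<le> q * norm x" for x
  proof -
    define R where "R = E - 1 - w"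
    have nR: "norm R \<le> h^2 * z^2 * exp z"
    proof -
      have "norm R \<le> (norm w)^2 * exp (norm w)" unfolding R_def E_def by (rule exp_remainder)
      also have "\<dots> \<le> (h * z)^2 * exp z" unfolding nw
      proof (rule mult_left_mono)
        have "h * z \<le> z" using h1 h0 z0 by (simp add: mult_left_le_one_le)
        then show "exp (h * z) \<le> exp z" by simp
      qed simp
      finally show ?thesis by (simp add: power_mult_distrib)
    qed
    have Eeq: "blinfun_apply (rep_op E) x = (x - h *\<^sub>R (\<Theta> *v x)) + blinfun_apply (rep_op R) x"
      unfolding R_def w_def Z_def
      by (simp add: minus_op.rep_eq plus_op.rep_eq one_op.rep_eq uminus_op.rep_eq scaleR_op.rep_eq
          blinfun.bilinear_simps rep_phi)
    have main: "norm (x - h *\<^sub>R (\<Theta> *v x)) \<le> (1 - h * lam + h^2 * z^2 / 2) * norm x"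
    proof (rule power2_le_imp_le)
      have "(norm (x - h *\<^sub>R (\<Theta> *v x)))^2 = (norm x)^2 - 2 * h * (x \<bullet> (\<Theta> *v x)) + h^2 * (norm (\<Theta> *v x))^2"
        by (simp only: power2_norm_eq_inner) (simp add: inner_diff_left inner_diff_right inner_commute power2_eq_square algebra_simps)
      also have "\<dots> \<le> (norm x)^2 - 2 * h * (lam * (norm x)^2) + h^2 * (z * norm x)^2"
        using lam(2)[of x] h0 Zb[of x]
        by (intro add_mono diff_mono order_refl mult_left_mono power_mono) auto
      also have "\<dots> \<le> ((1 - h * lam + h^2 * z^2 / 2) * norm x)^2"
      proof -
        have "0 \<le> (h * lam - h^2 * z^2 / 2)^2 * (norm x)^2" by simp
        then show ?thesis by (simp add: power2_eq_square algebra_simps)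
      qed
      finally show "(norm (x - h *\<^sub>R (\<Theta> *v x)))^2 \<le> ((1 - h * lam + h^2 * z^2 / 2) * norm x)^2" .
      show "0 \<le> (1 - h * lam + h^2 * z^2 / 2) * norm x" using hlam by simp
    qed
    have "norm (blinfun_apply (rep_op E) x) \<le> norm (x - h *\<^sub>R (\<Theta> *v x)) + norm (blinfun_apply (rep_op R) x)"
      unfolding Eeq by (rule norm_triangle_ineq)
    also have "\<dots> \<le> (1 - h * lam + h^2 * z^2 / 2) * norm x + (h^2 * z^2 * exp z) * norm x"
    proof (rule add_mono[OF main])
      have "norm (blinfun_apply (rep_op R) x) \<le> norm R * norm x"
        using norm_blinfun[of "rep_op R" x] by (simp add: norm_op.rep_eq)
      also have "\<dots> \<le> (h^2 * z^2 * exp z) * norm x" by (rule mult_right_mono[OF nR]) simp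
      finally show "norm (blinfun_apply (rep_op R) x) \<le> (h^2 * z^2 * exp z) * norm x" .
    qed
    also have "\<dots> = (1 - h * lam + h * (h * C)) * norm x" by (simp add: C_def power2_eq_square algebra_simps)
    also have "\<dots> \<le> q * norm x"
    proof (rule mult_right_mono)
      have "h * (h * C) \<le> h * (lam / 2)" using hC h0 by (intro mult_left_mono) auto
      then show "1 - h * lam + h * (h * C) \<le> q" by (simp add: q_def)
    qed simp
    finally show ?thesis .
  qed
  show ?thesis
  proof (intro exI conjI allI)
    fix c :: nat and x
    have "phi ((- real c) *\<^sub>R \<Theta>) = of_nat (c * k) * w"
    proof -
      have e: "real c * real k * h = real c" using kpos by (simp add: h_def)
      have "phi ((- real c) *\<^sub>R \<Theta>) = (- real c) *\<^sub>R phi \<Theta>" by (rule phi_scaleR)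
      also have "\<dots> = (real (c * k)) *\<^sub>R w"
        by (simp add: w_def Z_def e)
      finally have "phi ((- real c) *\<^sub>R \<Theta>) = (real (c * k)) *\<^sub>R w" .
      then show ?thesis by (simp add: scaleR_conv_of_real)
    qed
    then have "exp (phi ((- real c) *\<^sub>R \<Theta>)) = E ^ (c * k)"
      unfolding E_def by (simp only: exp_nat_mult)
    then have "mexp ((- real c) *\<^sub>R \<Theta>) *v x = blinfun_apply (rep_op (E ^ (c * k))) x"
      by (simp only: mexp_vec)
    then have "norm (mexp ((- real c) *\<^sub>R \<Theta>) *v x) \<le> q ^ (c * k) * norm x"
      using rep_pow_bound[OF q0 Ebound] by simp
    also have "\<dots> \<le> q ^ c * norm x"
      using q0 q1 kpos by (intro mult_right_mono power_decreasing) (auto simp: Suc_le_eq)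
    finally show "norm (mexp ((- real c) *\<^sub>R \<Theta>) *v x) \<le> q ^ c * norm x" .
  qed (use q0 q1 in auto)
qed

lemma comm_sum_right:
  fixes X :: "'a::{real_algebra}"
  assumes "\<forall>l\<in>S. X * Y l = Y l * X"
  shows "X * (\<Sum>l\<in>S. a l *\<^sub>R Y l) = (\<Sum>l\<in>S. a l *\<^sub>R Y l) * X"
proof -
  have "X * (\<Sum>l\<in>S. a l *\<^sub>R Y l) = (\<Sum>l\<in>S. a l *\<^sub>R (X * Y l))"
    by (simp add: sum_distrib_left)
  also have "\<dots> = (\<Sum>l\<in>S. a l *\<^sub>R (Y l * X))" using assms by simp
  also have "\<dots> = (\<Sum>l\<in>S. a l *\<^sub>R Y l) * X" by (simp add: sum_distrib_right)
  finally show ?thesis .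
qed

lemma comm_sum_sum:
  fixes Y :: "nat \<Rightarrow> 'a::{real_algebra}"
  assumes "\<forall>k\<in>S. \<forall>l\<in>S. Y k * Y l = Y l * Y k"
  shows "(\<Sum>l\<in>S. a l *\<^sub>R Y l) * (\<Sum>l\<in>S. b l *\<^sub>R Y l) = (\<Sum>l\<in>S. b l *\<^sub>R Y l) * (\<Sum>l\<in>S. a l *\<^sub>R Y l)"
proof -
  have "\<forall>k\<in>S. (\<Sum>l\<in>S. a l *\<^sub>R Y l) * Y k = Y k * (\<Sum>l\<in>S. a l *\<^sub>R Y l)"
  proof
    fix k assume "k \<in> S"
    then have "\<forall>l\<in>S. Y k * Y l = Y l * Y k" using assms by blast
    then show "(\<Sum>l\<in>S. a l *\<^sub>R Y l) * Y k = Y k * (\<Sum>l\<in>S. a l *\<^sub>R Y l)"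
      using comm_sum_right[of S "Y k" Y a] by simp
  qed
  then show ?thesis using comm_sum_right[of S "\<Sum>l\<in>S. a l *\<^sub>R Y l" Y b] by simp
qed

lemma phi_tstar: "phi (tstar N d \<Theta>) = (\<Sum>l<N. of_int (d l) *\<^sub>R phi (\<Theta> l))"
  by (simp add: tstar_def phi_sum phi_scaleR)

lemma phi_comm:
  assumes "\<forall>k<N. \<forall>l<N. \<Theta> k ** \<Theta> l = \<Theta> l ** \<Theta> k"
  shows "\<forall>k\<in>{..<N}. \<forall>l\<in>{..<N}. phi (\<Theta> k) * phi (\<Theta> l) = phi (\<Theta> l) * phi (\<Theta> k)"
  using assms by (auto simp: phi_mult[symmetric])

lemma mexp_tstar_add:
  assumes "\<forall>k<N. \<forall>l<N. \<Theta> k ** \<Theta> l = \<Theta> l ** \<Theta> k"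
  shows "mexp (tstar N (\<lambda>l. k l + d l) \<Theta>) = mexp (tstar N d \<Theta>) ** mexp (tstar N k \<Theta>)"
proof -
  have "tstar N (\<lambda>l. k l + d l) \<Theta> = tstar N d \<Theta> + tstar N k \<Theta>"
    by (simp add: tstar_def scaleR_add_left sum.distrib)
  moreover have "phi (tstar N d \<Theta>) * phi (tstar N k \<Theta>) = phi (tstar N k \<Theta>) * phi (tstar N d \<Theta>)"
    unfolding phi_tstar by (rule comm_sum_sum[OF phi_comm[OF assms]])
  ultimately show ?thesis by (simp add: mexp_add)
qed

lemma mexp_zero_vec: "mexp 0 *v x = x"
  by (simp add: mexp_vec phi_zero one_op.rep_eq)

lemma decayN:
  fixes \<Theta> :: "nat \<Rightarrow> real^'n::finite^'n"
  assumes pd: "\<forall>l<N. sym_posdef (\<Theta> l)"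
    and cm: "\<forall>k<N. \<forall>l<N. \<Theta> k ** \<Theta> l = \<Theta> l ** \<Theta> k"
  shows "\<exists>q\<ge>0. q < 1 \<and> (\<forall>d. (\<forall>l<N. d l \<le> 0) \<longrightarrow>
           (\<forall>x. norm (mexp (tstar N d \<Theta>) *v x) \<le> q ^ (\<Sum>l<N. nat (- d l)) * norm x))"
proof -
  have "\<forall>l\<in>{..<N}. \<exists>q. q \<ge> 0 \<and> q < 1 \<and> (\<forall>(c::nat) x. norm (mexp ((- real c) *\<^sub>R \<Theta> l) *v x) \<le> q^c * norm x)"
    using decay1 pd by auto
  then obtain Q where Q: "\<And>l. l < N \<Longrightarrow> Q l \<ge> 0 \<and> Q l < 1 \<and> (\<forall>(c::nat) x. norm (mexp ((- real c) *\<^sub>R \<Theta> l) *v x) \<le> (Q l)^c * norm x)"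
    by (metis lessThan_iff bchoice)
  define q where "q = Max (insert 0 (Q ` {..<N}))"
  have q0: "0 \<le> q" by (simp add: q_def)
  have q1: "q < 1" unfolding q_def using Q by (auto simp: Max_less_iff)
  have Qq: "Q l \<le> q" if "l < N" for l unfolding q_def using that by (intro Max_ge) auto
  have cmp: "\<forall>k\<in>{..<N}. \<forall>l\<in>{..<N}. phi (\<Theta> k) * phi (\<Theta> l) = phi (\<Theta> l) * phi (\<Theta> k)"
    by (rule phi_comm[OF cm])
  show ?thesis
  proof (intro exI conjI allI impI)
    fix d :: "nat \<Rightarrow> int" and x :: "real^'n"
    assume dn: "\<forall>l<N. d l \<le> 0"
    have "n \<le> N \<Longrightarrow> norm (mexp (\<Sum>l<n. of_int (d l) *\<^sub>R \<Theta> l) *v x) \<le> q ^ (\<Sum>l<n. nat (- d l)) * norm x" for n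
    proof (induction n arbitrary: x)
      case 0 then show ?case by (simp add: mexp_zero_vec)
    next
      case (Suc n)
      have nN: "n < N" using Suc by simp
      define A where "A = (\<Sum>l<n. of_int (d l) *\<^sub>R \<Theta> l)"
      define B where "B = of_int (d n) *\<^sub>R \<Theta> n"
      have cAB: "phi A * phi B = phi B * phi A"
      proof -
        have "\<forall>l\<in>{..<n}. phi (\<Theta> n) * phi (\<Theta> l) = phi (\<Theta> l) * phi (\<Theta> n)"
          using cmp nN by auto
        then have "phi (\<Theta> n) * phi A = phi A * phi (\<Theta> n)"
          unfolding A_def phi_sum phi_scaleR by (rule comm_sum_right)
        then show ?thesis unfolding B_def phi_scaleR by (simp add: mult_scaleR_right mult_scaleR_left)
      qed
      have Bc: "B = (- real (nat (- d n))) *\<^sub>R \<Theta> n"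
        using dn nN by (simp add: B_def)
      have nB: "norm (mexp B *v x) \<le> q ^ nat (- d n) * norm x"
      proof -
        have "norm (mexp B *v x) \<le> (Q n) ^ nat (- d n) * norm x" using Q[OF nN] Bc by simp
        also have "\<dots> \<le> q ^ nat (- d n) * norm x"
          using Q[OF nN] Qq[OF nN] by (intro mult_right_mono power_mono) auto
        finally show ?thesis .
      qed
      have "(\<Sum>l<Suc n. of_int (d l) *\<^sub>R \<Theta> l) = A + B" by (simp add: A_def B_def)
      then have "mexp (\<Sum>l<Suc n. of_int (d l) *\<^sub>R \<Theta> l) *v x = mexp A *v (mexp B *v x)"
        using mexp_add[OF cAB] by (simp add: matrix_vector_mul_assoc)
      then have "norm (mexp (\<Sum>l<Suc n. of_int (d l) *\<^sub>R \<Theta> l) *v x) = norm (mexp A *v (mexp B *v x))" by simp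
      also have "\<dots> \<le> q ^ (\<Sum>l<n. nat (- d l)) * norm (mexp B *v x)"
        using Suc.IH[of "mexp B *v x"] Suc.prems by (simp add: A_def)
      also have "\<dots> \<le> q ^ (\<Sum>l<n. nat (- d l)) * (q ^ nat (- d n) * norm x)"
        by (rule mult_left_mono[OF nB]) (simp add: q0)
      also have "\<dots> = q ^ (\<Sum>l<Suc n. nat (- d l)) * norm x" by (simp add: power_add)
      finally show ?case .
    qed
    then show "norm (mexp (tstar N d \<Theta>) *v x) \<le> q ^ (\<Sum>l<N. nat (- d l)) * norm x"
      by (simp add: tstar_def)
  qed (use q0 q1 in auto)
qed


primrec nev :: "nat list \<Rightarrow> ((nat \<Rightarrow> int) \<Rightarrow> bool) \<Rightarrow> bool" where
  "nev [] p = (\<forall>M. p M)"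
| "nev (l # ls) p = nev ls (\<lambda>M. eventually (\<lambda>m. p (M(l := m))) at_top)"

lemma nev_mono: "nev ls p \<Longrightarrow> (\<And>M. p M \<Longrightarrow> q M) \<Longrightarrow> nev ls q"
proof (induction ls arbitrary: p q)
  case (Cons l ls)
  show ?case unfolding nev.simps
    by (rule Cons.IH[OF Cons.prems(1)[unfolded nev.simps]]) (auto elim: eventually_mono intro: Cons.prems(2))
qed simp

lemma nev_true: "nev ls (\<lambda>M. True)"
  by (induction ls) simp_all

lemma nev_conj: "nev ls p \<Longrightarrow> nev ls q \<Longrightarrow> nev ls (\<lambda>M. p M \<and> q M)"
proof (induction ls arbitrary: p q)
  case (Cons l ls)
  have "nev ls (\<lambda>M. eventually (\<lambda>m. p (M(l := m))) at_top \<and> eventually (\<lambda>m. q (M(l := m))) at_top)"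
    using Cons.IH Cons.prems by simp
  then show ?case unfolding nev.simps
    by (rule nev_mono) (simp add: eventually_conj)
qed simp

lemma nev_ball: "finite F \<Longrightarrow> (\<And>K. K \<in> F \<Longrightarrow> nev ls (p K)) \<Longrightarrow> nev ls (\<lambda>M. \<forall>K\<in>F. p K M)"
proof (induction F rule: finite_induct)
  case empty then show ?case by (simp add: nev_true)
next
  case (insert x F)
  have "nev ls (\<lambda>M. p x M \<and> (\<forall>K\<in>F. p K M))"
    using insert by (intro nev_conj) auto
  then show ?case by simp
qed

lemma nev_ex: "nev ls p \<Longrightarrow> \<exists>M. p M"
proof (induction ls arbitrary: p)
  case (Cons l ls)
  then obtain M where "eventually (\<lambda>m. p (M(l := m))) at_top" by fastforce
  then obtain m where "p (M(l := m))" using eventually_happens'[of "at_top::int filter"] by auto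
  then show ?case by blast
qed auto

lemma nev_ge: "nev ls (\<lambda>M. \<forall>l\<in>set ls. B l \<le> M l)"
proof (induction ls)
  case (Cons l ls)
  show ?case unfolding nev.simps
  proof (rule nev_mono[OF Cons.IH])
    fix M assume H: "\<forall>l\<in>set ls. B l \<le> M l"
    show "eventually (\<lambda>m. \<forall>l'\<in>set (l # ls). B l' \<le> (M(l := m)) l') at_top"
    proof (rule eventually_mono[OF eventually_ge_at_top[of "B l"]])
      fix m assume "B l \<le> m" then show "\<forall>l'\<in>set (l # ls). B l' \<le> (M(l := m)) l'" using H by auto
    qed
  qed
qed simp

lemma nev_shift: "nev ls p \<Longrightarrow> nev ls (\<lambda>M. p (\<lambda>i. M i + d i))"
proof (induction ls arbitrary: p)
  case (Cons l ls)
  have "nev ls (\<lambda>M. eventually (\<lambda>m. p ((\<lambda>i. M i + d i)(l := m))) at_top)"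
    using Cons.IH[OF Cons.prems[unfolded nev.simps]] by (simp add: fun_upd_def)
  then show ?case unfolding nev.simps
  proof (rule nev_mono)
    fix M assume ev: "eventually (\<lambda>m. p ((\<lambda>i. M i + d i)(l := m))) at_top"
    then obtain N0 where N0: "\<forall>m\<ge>N0. p ((\<lambda>i. M i + d i)(l := m))"
      by (auto simp: eventually_at_top_linorder)
    show "eventually (\<lambda>m. p (\<lambda>i. (M(l := m)) i + d i)) at_top"
      unfolding eventually_at_top_linorder
    proof (intro exI allI impI)
      fix m assume "N0 - d l \<le> m"
      then have "p ((\<lambda>i. M i + d i)(l := m + d l))" using N0 by simp
      moreover have "(\<lambda>i. M i + d i)(l := m + d l) = (\<lambda>i. (M(l := m)) i + d i)" by auto
      ultimately show "p (\<lambda>i. (M(l := m)) i + d i)" by simp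
    qed
  qed
qed simp

lemma ilim_meas:
  "ilim P (l # ls) S Y \<Longrightarrow> Y \<in> borel_measurable P \<and> (\<forall>M. S M \<in> borel_measurable P)"
proof (induction ls arbitrary: l S)
  case Nil
  then obtain T where T: "\<forall>M. conv_prob P (\<lambda>m. S (M(l := m))) (T M) at_top" "\<forall>M. T M = Y" by auto
  have "S M \<in> borel_measurable P" for M using T(1)[rule_format, of M] unfolding conv_prob_def
    by (metis fun_upd_triv)
  then show ?case using T unfolding conv_prob_def by metis
next
  case (Cons l' ls)
  then obtain T where T: "\<forall>M. conv_prob P (\<lambda>m. S (M(l := m))) (T M) at_top" "ilim P (l' # ls) T Y" by auto
  have "S M \<in> borel_measurable P" for M using T(1)[rule_format, of M] unfolding conv_prob_def
    by (metis fun_upd_triv)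
  then show ?case using Cons.IH[OF T(2)] by simp
qed

lemma meas_set_dist[measurable]:
  fixes f g :: "'a \<Rightarrow> 'b::{metric_space,second_countable_topology}"
  shows "f \<in> borel_measurable P \<Longrightarrow> g \<in> borel_measurable P \<Longrightarrow> {\<omega>\<in>space P. c < dist (f \<omega>) (g \<omega>)} \<in> sets P"
  by measurable

context prob_space
begin

lemma split_dist:
  fixes f g h :: "'a \<Rightarrow> 'b::{metric_space,second_countable_topology}"
  assumes [measurable]: "f \<in> borel_measurable M" "g \<in> borel_measurable M" "h \<in> borel_measurable M"
  shows "measure M {\<omega>\<in>space M. a + b < dist (f \<omega>) (h \<omega>)}
     \<le> measure M {\<omega>\<in>space M. a < dist (f \<omega>) (g \<omega>)} + measure M {\<omega>\<in>space M. b < dist (g \<omega>) (h \<omega>)}"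
proof -
  have "{\<omega>\<in>space M. a + b < dist (f \<omega>) (h \<omega>)} \<subseteq> {\<omega>\<in>space M. a < dist (f \<omega>) (g \<omega>)} \<union> {\<omega>\<in>space M. b < dist (g \<omega>) (h \<omega>)}"
  proof (rule subsetI)
    fix \<omega> assume "\<omega> \<in> {\<omega>\<in>space M. a + b < dist (f \<omega>) (h \<omega>)}"
    moreover have "dist (f \<omega>) (h \<omega>) \<le> dist (f \<omega>) (g \<omega>) + dist (g \<omega>) (h \<omega>)" by (rule dist_triangle)
    ultimately show "\<omega> \<in> {\<omega>\<in>space M. a < dist (f \<omega>) (g \<omega>)} \<union> {\<omega>\<in>space M. b < dist (g \<omega>) (h \<omega>)}" by auto
  qed
  then have "measure M {\<omega>\<in>space M. a + b < dist (f \<omega>) (h \<omega>)} \<le> measure M ({\<omega>\<in>space M. a < dist (f \<omega>) (g \<omega>)} \<union> {\<omega>\<in>space M. b < dist (g \<omega>) (h \<omega>)})"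
    by (intro finite_measure_mono) auto
  also have "\<dots> \<le> measure M {\<omega>\<in>space M. a < dist (f \<omega>) (g \<omega>)} + measure M {\<omega>\<in>space M. b < dist (g \<omega>) (h \<omega>)}"
    by (intro measure_Un_le) auto
  finally show ?thesis .
qed

lemma split_sum:
  fixes g :: "'i \<Rightarrow> 'a \<Rightarrow> real"
  assumes F: "finite F" "F \<noteq> {}" and [measurable]: "\<And>K. K \<in> F \<Longrightarrow> g K \<in> borel_measurable M"
  shows "measure M {\<omega>\<in>space M. e < (\<Sum>K\<in>F. g K \<omega>)} \<le> (\<Sum>K\<in>F. measure M {\<omega>\<in>space M. e / real (card F) < g K \<omega>})"
proof -
  have cF: "real (card F) > 0" using F by (simp add: card_gt_0_iff)
  have "{\<omega>\<in>space M. e < (\<Sum>K\<in>F. g K \<omega>)} \<subseteq> (\<Union>K\<in>F. {\<omega>\<in>space M. e / real (card F) < g K \<omega>})"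
  proof
    fix \<omega> assume w: "\<omega> \<in> {\<omega>\<in>space M. e < (\<Sum>K\<in>F. g K \<omega>)}"
    show "\<omega> \<in> (\<Union>K\<in>F. {\<omega>\<in>space M. e / real (card F) < g K \<omega>})"
    proof (rule ccontr)
      assume "\<omega> \<notin> (\<Union>K\<in>F. {\<omega>\<in>space M. e / real (card F) < g K \<omega>})"
      then have "\<forall>K\<in>F. g K \<omega> \<le> e / real (card F)" using w by auto
      then have "(\<Sum>K\<in>F. g K \<omega>) \<le> (\<Sum>K\<in>F. e / real (card F))" by (intro sum_mono) auto
      also have "\<dots> = e" using cF by simp
      finally show False using w by simp
    qed
  qed
  then have "measure M {\<omega>\<in>space M. e < (\<Sum>K\<in>F. g K \<omega>)} \<le> measure M (\<Union>K\<in>F. {\<omega>\<in>space M. e / real (card F) < g K \<omega>})"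
    using F by (intro finite_measure_mono) auto
  also have "\<dots> \<le> (\<Sum>K\<in>F. measure M {\<omega>\<in>space M. e / real (card F) < g K \<omega>})"
    using F by (intro measure_UNION_le) auto
  finally show ?thesis .
qed

lemma ilim_nev:
  fixes S :: "(nat \<Rightarrow> int) \<Rightarrow> 'a \<Rightarrow> 'b::{metric_space,second_countable_topology}"
  assumes "ilim M ls S Y" "Y \<in> borel_measurable M" "\<And>K. S K \<in> borel_measurable M" "e > 0" "\<delta> > 0"
  shows "nev ls (\<lambda>K. measure M {\<omega>\<in>space M. e < dist (S K \<omega>) (Y \<omega>)} < \<delta>)"
  using assms
proof (induction ls arbitrary: S e \<delta>)
  case Nil
  then show ?case by simp
next
  case (Cons l ls)
  then obtain T where T: "\<And>K. conv_prob M (\<lambda>m. S (K(l := m))) (T K) at_top" "ilim M ls T Y" by auto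
  have Tm[measurable]: "T K \<in> borel_measurable M" for K using T(1)[of K] unfolding conv_prob_def by simp
  have Sm[measurable]: "S K \<in> borel_measurable M" for K using Cons.prems by simp
  have Ym[measurable]: "Y \<in> borel_measurable M" using Cons.prems by simp
  have IH: "nev ls (\<lambda>K. measure M {\<omega>\<in>space M. e/2 < dist (T K \<omega>) (Y \<omega>)} < \<delta>/2)"
    using Cons.prems by (intro Cons.IH[OF T(2)]) auto
  show ?case unfolding nev.simps
  proof (rule nev_mono[OF IH])
    fix K assume K: "measure M {\<omega>\<in>space M. e/2 < dist (T K \<omega>) (Y \<omega>)} < \<delta>/2"
    have "((\<lambda>m. measure M {\<omega>\<in>space M. e/2 < dist (S (K(l := m)) \<omega>) (T K \<omega>)}) \<longlongrightarrow> 0) at_top"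
    proof -
      have C: "\<forall>\<epsilon>>0. ((\<lambda>m. measure M {\<omega>\<in>space M. \<epsilon> < dist (S (K(l := m)) \<omega>) (T K \<omega>)}) \<longlongrightarrow> 0) at_top"
        using T(1)[of K] unfolding conv_prob_def by blast
      have "e/2 > 0" using Cons.prems by simp
      with C show ?thesis by blast
    qed
    then have "eventually (\<lambda>m. measure M {\<omega>\<in>space M. e/2 < dist (S (K(l := m)) \<omega>) (T K \<omega>)} < \<delta>/2) at_top"
      using Cons.prems by (intro order_tendstoD(2)) auto
    then show "eventually (\<lambda>m. measure M {\<omega>\<in>space M. e < dist (S (K(l := m)) \<omega>) (Y \<omega>)} < \<delta>) at_top"
    proof (rule eventually_mono)
      fix m assume m: "measure M {\<omega>\<in>space M. e/2 < dist (S (K(l := m)) \<omega>) (T K \<omega>)} < \<delta>/2"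
      have "measure M {\<omega>\<in>space M. e/2 + e/2 < dist (S (K(l := m)) \<omega>) (Y \<omega>)}
        \<le> measure M {\<omega>\<in>space M. e/2 < dist (S (K(l := m)) \<omega>) (T K \<omega>)} + measure M {\<omega>\<in>space M. e/2 < dist (T K \<omega>) (Y \<omega>)}"
        by (rule split_dist) auto
      then show "measure M {\<omega>\<in>space M. e < dist (S (K(l := m)) \<omega>) (Y \<omega>)} < \<delta>" using m K by simp
    qed
  qed
qed

end


lemma mv_sum: "(A::real^'n^'m) *v (\<Sum>i\<in>S. f i) = (\<Sum>i\<in>S. A *v f i)"
  by (induction S rule: infinite_finite_induct) (auto simp: matrix_vector_right_distrib)

lemma mv_meas[measurable]: "(\<lambda>x. (A::real^'n^'m) *v x) \<in> borel_measurable borel"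
  by (intro borel_measurable_continuous_onI linear_continuous_on matrix_vector_mul_bounded_linear)

lemma finite_box: "finite (box N t M)"
proof -
  have "box N t M \<subseteq> (\<lambda>f l. if l < N then f l else 0) ` (PiE {..<N} (\<lambda>l. {- M l..t l}))"
  proof
    fix j assume j: "j \<in> box N t M"
    have "j = (\<lambda>l. if l < N then restrict j {..<N} l else 0)" using j by (auto simp: box_def)
    moreover have "restrict j {..<N} \<in> PiE {..<N} (\<lambda>l. {- M l..t l})" using j by (auto simp: box_def)
    ultimately show "j \<in> (\<lambda>f l. if l < N then f l else 0) ` (PiE {..<N} (\<lambda>l. {- M l..t l}))" by blast
  qed
  then show ?thesis by (rule finite_subset) (intro finite_imageI finite_PiE, auto)
qed

lemma finite_bits: "finite (bits N)"
proof -
  have "bits N \<subseteq> (\<lambda>f l. if l < N then f l else 0) ` (PiE {..<N} (\<lambda>l. {0,1}))"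
  proof
    fix j assume j: "j \<in> bits N"
    have "j = (\<lambda>l. if l < N then restrict j {..<N} l else 0)" using j by (auto simp: bits_def)
    moreover have "restrict j {..<N} \<in> PiE {..<N} (\<lambda>l. {0,1})" using j by (auto simp: bits_def)
    ultimately show "j \<in> (\<lambda>f l. if l < N then f l else 0) ` (PiE {..<N} (\<lambda>l. {0,1}))" by blast
  qed
  then show ?thesis by (rule finite_subset) (intro finite_imageI finite_PiE, auto)
qed

lemma box_ZN: "box N t M \<subseteq> ZN N"
  by (auto simp: box_def ZN_def)

locale mt = prob_space P for P :: "'a measure" +
  fixes N :: nat and \<Theta> :: "nat \<Rightarrow> real^'n::finite^'n"
    and G :: "(nat \<Rightarrow> int) \<Rightarrow> 'a \<Rightarrow> real^'n" and Y :: "(nat \<Rightarrow> int) \<Rightarrow> 'a \<Rightarrow> real^'n"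
  assumes pd: "\<forall>l<N. sym_posdef (\<Theta> l)"
    and cm: "\<forall>k<N. \<forall>l<N. \<Theta> k ** \<Theta> l = \<Theta> l ** \<Theta> k"
    and GG: "G \<in> GTheta P N \<Theta>"
    and hY: "\<forall>t\<in>ZN N. ilim P (rev [0..<N]) (psum N \<Theta> G t) (Y t)"
begin

lemma G_meas: "t \<in> ZN N \<Longrightarrow> G t \<in> borel_measurable P"
  using GG by (auto simp: GTheta_def)

lemma stat: "stationary_incr P N G"
  using GG by (auto simp: GTheta_def)

lemma incr_meas: "t \<in> ZN N \<Longrightarrow> incr N G t \<in> borel_measurable P"
proof -
  assume t: "t \<in> ZN N"
  have "(\<lambda>l. t l - i l) \<in> ZN N" if "i \<in> bits N" for i using t that by (auto simp: ZN_def bits_def)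
  then have "\<And>i. i \<in> bits N \<Longrightarrow> G (\<lambda>l. t l - i l) \<in> borel_measurable P" using G_meas by blast
  then show ?thesis unfolding incr_def[abs_def]
    by (intro borel_measurable_sum borel_measurable_scaleR borel_measurable_const) auto
qed

lemma psum_meas: "t \<in> ZN N \<Longrightarrow> psum N \<Theta> G t M \<in> borel_measurable P"
proof -
  assume "t \<in> ZN N"
  have "\<And>j. j \<in> box N t M \<Longrightarrow> (\<lambda>\<omega>. mexp (tstar N j \<Theta>) *v incr N G j \<omega>) \<in> borel_measurable P"
    by (intro measurable_compose[OF incr_meas mv_meas]) (use box_ZN in blast)
  then show ?thesis unfolding psum_def[abs_def] by (intro borel_measurable_sum) auto
qed

lemma Y_meas: "t \<in> ZN N \<Longrightarrow> Y t \<in> borel_measurable P"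
proof (cases "rev [0..<N]")
  case Nil
  assume t: "t \<in> ZN N"
  then have "psum N \<Theta> G t M = Y t" for M using hY Nil by (metis ilim.simps(1))
  then show ?thesis using psum_meas[OF t] by metis
next
  case (Cons l ls)
  assume t: "t \<in> ZN N"
  then show ?thesis using hY ilim_meas Cons by metis
qed

lemma nevY: "t \<in> ZN N \<Longrightarrow> e > 0 \<Longrightarrow> \<delta> > 0 \<Longrightarrow>
   nev (rev [0..<N]) (\<lambda>M. measure P {\<omega>\<in>space P. e < dist (psum N \<Theta> G t M \<omega>) (Y t \<omega>)} < \<delta>)"
  using hY by (intro ilim_nev Y_meas psum_meas) auto

lemma LT:
  assumes s: "s \<in> ZN N" and t: "t \<in> ZN N" and U: "U \<in> sets borel"
  defines "d \<equiv> (\<lambda>l. s l - t l)"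
  shows "measure P {\<omega>\<in>space P. psum N \<Theta> G s M \<omega> \<in> U}
       = measure P {\<omega>\<in>space P. mexp (tstar N d \<Theta>) *v psum N \<Theta> G t (\<lambda>l. M l + d l) \<omega> \<in> U}"
proof -
  define B where "B = box N t (\<lambda>l. M l + d l)"
  have finB: "finite B" by (simp add: B_def finite_box)
  have BZ: "B \<subseteq> ZN N" by (simp add: B_def box_ZN)
  have dZ: "d \<in> ZN N" using s t by (auto simp: ZN_def d_def)
  have img: "box N s M = (\<lambda>k l. k l + d l) ` B"
  proof (rule set_eqI, rule iffI)
    fix j assume j: "j \<in> box N s M"
    have "(\<lambda>l. j l - d l) \<in> B" using j t s by (auto simp: B_def box_def d_def ZN_def)
    then have "(\<lambda>k l. k l + d l) (\<lambda>l. j l - d l) \<in> (\<lambda>k l. k l + d l) ` B" by (rule imageI)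
    then show "j \<in> (\<lambda>k l. k l + d l) ` B" by simp
  next
    fix j assume "j \<in> (\<lambda>k l. k l + d l) ` B"
    then obtain k where k: "k \<in> B" "j = (\<lambda>l. k l + d l)" by blast
    then show "j \<in> box N s M" using s t by (auto simp: B_def box_def d_def ZN_def)
  qed
  have inj: "inj_on (\<lambda>k l. k l + d l) B"
    by (rule inj_onI) (simp add: fun_eq_iff)
  define H where "H x = mexp (tstar N d \<Theta>) *v (\<Sum>k\<in>B. mexp (tstar N k \<Theta>) *v x k)" for x :: "(nat \<Rightarrow> int) \<Rightarrow> real^'n"
  have Hm: "H \<in> borel_measurable (PiM B (\<lambda>_. borel))"
  proof -
    have c: "(\<lambda>x. x k) \<in> measurable (PiM B (\<lambda>_. borel)) borel" if "k \<in> B" for k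
      using that by (rule measurable_component_singleton)
    have "(\<lambda>x. \<Sum>k\<in>B. mexp (tstar N k \<Theta>) *v x k) \<in> borel_measurable (PiM B (\<lambda>_. borel))"
      by (intro borel_measurable_sum measurable_compose[OF c mv_meas]) auto
    then show ?thesis unfolding H_def by (rule measurable_compose[OF _ mv_meas])
  qed
  define F1 where "F1 \<omega> = (\<lambda>k\<in>B. incr N G (\<lambda>l. k l + d l) \<omega>)" for \<omega>
  define F0 where "F0 \<omega> = (\<lambda>k\<in>B. incr N G k \<omega>)" for \<omega>
  have F1m: "F1 \<in> measurable P (PiM B (\<lambda>_. borel))"
    unfolding F1_def
  proof (rule measurable_restrict)
    fix k assume "k \<in> B"
    then have "(\<lambda>l. k l + d l) \<in> ZN N" using BZ dZ by (auto simp: ZN_def)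
    then show "incr N G (\<lambda>l. k l + d l) \<in> borel_measurable P" by (rule incr_meas)
  qed
  have F0m: "F0 \<in> measurable P (PiM B (\<lambda>_. borel))"
    unfolding F0_def using BZ by (intro measurable_restrict incr_meas) auto
  have dist_eq: "distr P (PiM B (\<lambda>_. borel)) F1 = distr P (PiM B (\<lambda>_. borel)) F0"
    using stat dZ finB BZ unfolding stationary_incr_def F1_def F0_def by blast
  have e1: "psum N \<Theta> G s M \<omega> = H (F1 \<omega>)" for \<omega>
  proof -
    have "psum N \<Theta> G s M \<omega> = (\<Sum>k\<in>B. mexp (tstar N (\<lambda>l. k l + d l) \<Theta>) *v incr N G (\<lambda>l. k l + d l) \<omega>)"
      unfolding psum_def img by (simp add: sum.reindex[OF inj])
    also have "\<dots> = (\<Sum>k\<in>B. mexp (tstar N d \<Theta>) *v (mexp (tstar N k \<Theta>) *v incr N G (\<lambda>l. k l + d l) \<omega>))"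
      by (simp add: mexp_tstar_add[OF cm] matrix_vector_mul_assoc)
    also have "\<dots> = H (F1 \<omega>)" unfolding H_def F1_def by (simp add: mv_sum)
    finally show ?thesis .
  qed
  have e0: "mexp (tstar N d \<Theta>) *v psum N \<Theta> G t (\<lambda>l. M l + d l) \<omega> = H (F0 \<omega>)" for \<omega>
    unfolding H_def F0_def psum_def B_def by simp
  have HU: "H -` U \<inter> space (PiM B (\<lambda>_. borel)) \<in> sets (PiM B (\<lambda>_. borel))"
    using Hm U by (rule measurable_sets)
  have "measure P {\<omega>\<in>space P. psum N \<Theta> G s M \<omega> \<in> U} = measure P (F1 -` (H -` U \<inter> space (PiM B (\<lambda>_. borel))) \<inter> space P)"
    using F1m by (intro arg_cong[where f="measure P"]) (auto simp: e1 measurable_space)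
  also have "\<dots> = measure (distr P (PiM B (\<lambda>_. borel)) F1) (H -` U \<inter> space (PiM B (\<lambda>_. borel)))"
    by (rule measure_distr[OF F1m HU, symmetric])
  also have "\<dots> = measure (distr P (PiM B (\<lambda>_. borel)) F0) (H -` U \<inter> space (PiM B (\<lambda>_. borel)))"
    by (simp add: dist_eq)
  also have "\<dots> = measure P (F0 -` (H -` U \<inter> space (PiM B (\<lambda>_. borel))) \<inter> space P)"
    by (rule measure_distr[OF F0m HU])
  also have "\<dots> = measure P {\<omega>\<in>space P. mexp (tstar N d \<Theta>) *v psum N \<Theta> G t (\<lambda>l. M l + d l) \<omega> \<in> U}"
    using F0m by (intro arg_cong[where f="measure P"]) (auto simp: e0 measurable_space)
  finally show ?thesis .
qed

end


lemma (in prob_space) meas_le2: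
  assumes "A \<subseteq> B \<union> C" "B \<in> sets M" "C \<in> sets M" "A \<in> sets M"
  shows "measure M A \<le> measure M B + measure M C"
proof -
  have "measure M A \<le> measure M (B \<union> C)" using assms by (intro finite_measure_mono) auto
  also have "\<dots> \<le> measure M B + measure M C" using assms by (intro measure_Un_le) auto
  finally show ?thesis .
qed

lemma norm_gt_borel: "{x::real^'n. c < norm x} \<in> sets borel"
  by (rule borel_open) (intro open_Collect_less continuous_intros)

context mt
begin

lemma claim1:
  assumes s: "s \<in> ZN N" and t: "t \<in> ZN N" and le: "\<forall>l<N. s l \<le> t l" and e: "e > 0"
    and q: "q \<ge> 0" "q < 1"
    and qd: "\<forall>d. (\<forall>l<N. d l \<le> 0) \<longrightarrow> (\<forall>x. norm (mexp (tstar N d \<Theta>) *v x) \<le> q ^ (\<Sum>l<N. nat (- d l)) * norm x)"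
  shows "measure P {\<omega>\<in>space P. e < norm (Y s \<omega>)}
      \<le> measure P {\<omega>\<in>space P. e/2 < q ^ (\<Sum>l<N. nat (t l - s l)) * norm (Y t \<omega>)}"
proof -
  define d where "d = (\<lambda>l. s l - t l)"
  define r where "r = q ^ (\<Sum>l<N. nat (t l - s l))"
  define E where "E = mexp (tstar N d \<Theta>)"
  have r0: "0 \<le> r" and r1: "r \<le> 1" using q by (auto simp: r_def power_le_one)
  have dn: "\<forall>l<N. d l \<le> 0" using le by (simp add: d_def)
  have sm: "(\<Sum>l<N. nat (- d l)) = (\<Sum>l<N. nat (t l - s l))" by (simp add: d_def)
  have Eb: "norm (E *v x) \<le> r * norm x" for x
    using qd dn unfolding E_def r_def sm[symmetric] by blast
  have [measurable]: "Y s \<in> borel_measurable P" "Y t \<in> borel_measurable P" using s t by (auto intro: Y_meas)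
  have [measurable]: "psum N \<Theta> G s M \<in> borel_measurable P" "psum N \<Theta> G t M \<in> borel_measurable P" for M
    using s t by (auto intro: psum_meas)
  show ?thesis unfolding r_def[symmetric]
  proof (rule field_le_epsilon)
    fix \<delta> :: real assume \<delta>: "\<delta> > 0"
    have "nev (rev [0..<N]) (\<lambda>M. measure P {\<omega>\<in>space P. e/4 < dist (psum N \<Theta> G s M \<omega>) (Y s \<omega>)} < \<delta>/2
         \<and> measure P {\<omega>\<in>space P. e/4 < dist (psum N \<Theta> G t (\<lambda>i. M i + d i) \<omega>) (Y t \<omega>)} < \<delta>/2)"
      using e \<delta> by (intro nev_conj nevY s nev_shift[OF nevY[OF t]]) auto
    then obtain M where M: "measure P {\<omega>\<in>space P. e/4 < dist (psum N \<Theta> G s M \<omega>) (Y s \<omega>)} < \<delta>/2"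
        "measure P {\<omega>\<in>space P. e/4 < dist (psum N \<Theta> G t (\<lambda>i. M i + d i) \<omega>) (Y t \<omega>)} < \<delta>/2"
      using nev_ex by blast
    have "measure P {\<omega>\<in>space P. e < norm (Y s \<omega>)}
      \<le> measure P {\<omega>\<in>space P. e/4 < dist (psum N \<Theta> G s M \<omega>) (Y s \<omega>)} + measure P {\<omega>\<in>space P. psum N \<Theta> G s M \<omega> \<in> {x. 3*e/4 < norm x}}"
    proof (rule meas_le2)
      show "{\<omega>\<in>space P. e < norm (Y s \<omega>)} \<subseteq> {\<omega>\<in>space P. e/4 < dist (psum N \<Theta> G s M \<omega>) (Y s \<omega>)} \<union> {\<omega>\<in>space P. psum N \<Theta> G s M \<omega> \<in> {x. 3*e/4 < norm x}}"
      proof (rule subsetI)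
        fix \<omega> assume "\<omega> \<in> {\<omega>\<in>space P. e < norm (Y s \<omega>)}"
        moreover have "norm (Y s \<omega>) \<le> dist (psum N \<Theta> G s M \<omega>) (Y s \<omega>) + norm (psum N \<Theta> G s M \<omega>)"
          using norm_triangle_ineq4[of "psum N \<Theta> G s M \<omega>" "Y s \<omega>"] norm_minus_commute[of "psum N \<Theta> G s M \<omega>" "Y s \<omega>"]
          by (simp add: dist_norm) (smt (verit) norm_minus_commute norm_triangle_ineq2)
        ultimately show "\<omega> \<in> {\<omega>\<in>space P. e/4 < dist (psum N \<Theta> G s M \<omega>) (Y s \<omega>)} \<union> {\<omega>\<in>space P. psum N \<Theta> G s M \<omega> \<in> {x. 3*e/4 < norm x}}"
          by auto
      qed
    qed measurable
    also have "measure P {\<omega>\<in>space P. psum N \<Theta> G s M \<omega> \<in> {x. 3*e/4 < norm x}}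
        = measure P {\<omega>\<in>space P. E *v psum N \<Theta> G t (\<lambda>l. M l + d l) \<omega> \<in> {x. 3*e/4 < norm x}}"
      unfolding E_def d_def by (rule LT[OF s t norm_gt_borel])
    also have "\<dots> \<le> measure P {\<omega>\<in>space P. e/4 < dist (psum N \<Theta> G t (\<lambda>i. M i + d i) \<omega>) (Y t \<omega>)}
        + measure P {\<omega>\<in>space P. e/2 < r * norm (Y t \<omega>)}"
    proof (rule meas_le2)
      show "{\<omega>\<in>space P. E *v psum N \<Theta> G t (\<lambda>l. M l + d l) \<omega> \<in> {x. 3*e/4 < norm x}} \<subseteq>
         {\<omega>\<in>space P. e/4 < dist (psum N \<Theta> G t (\<lambda>i. M i + d i) \<omega>) (Y t \<omega>)} \<union> {\<omega>\<in>space P. e/2 < r * norm (Y t \<omega>)}"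
      proof (rule subsetI)
        fix \<omega> assume w: "\<omega> \<in> {\<omega>\<in>space P. E *v psum N \<Theta> G t (\<lambda>l. M l + d l) \<omega> \<in> {x. 3*e/4 < norm x}}"
        define p where "p = psum N \<Theta> G t (\<lambda>l. M l + d l) \<omega>"
        have "norm (E *v p) \<le> norm (E *v (p - Y t \<omega>)) + norm (E *v Y t \<omega>)"
          using norm_triangle_ineq[of "E *v (p - Y t \<omega>)" "E *v Y t \<omega>"]
          by (simp add: matrix_vector_mult_diff_distrib)
        also have "\<dots> \<le> r * norm (p - Y t \<omega>) + r * norm (Y t \<omega>)" by (intro add_mono Eb)
        also have "\<dots> \<le> norm (p - Y t \<omega>) + r * norm (Y t \<omega>)"
          using r0 r1 by (intro add_mono mult_left_le_one_le) auto
        finally have "norm (E *v p) \<le> dist p (Y t \<omega>) + r * norm (Y t \<omega>)" by (simp add: dist_norm)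
        then show "\<omega> \<in> {\<omega>\<in>space P. e/4 < dist (psum N \<Theta> G t (\<lambda>i. M i + d i) \<omega>) (Y t \<omega>)} \<union> {\<omega>\<in>space P. e/2 < r * norm (Y t \<omega>)}"
          using w unfolding p_def by auto
      qed
    qed measurable
    finally show "measure P {\<omega>\<in>space P. e < norm (Y s \<omega>)} \<le> measure P {\<omega>\<in>space P. e/2 < r * norm (Y t \<omega>)} + \<delta>"
      using M by simp
  qed
qed

lemma UD:
  assumes t: "t \<in> ZN N" and e: "e > 0" and \<delta>: "\<delta> > 0"
  shows "\<exists>k::nat. \<forall>s\<in>ZN N. (\<forall>l<N. s l \<le> t l) \<longrightarrow> (\<exists>l<N. s l \<le> t l - int k) \<longrightarrow>
           measure P {\<omega>\<in>space P. e < norm (Y s \<omega>)} \<le> \<delta>"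
proof -
  obtain q where q: "q \<ge> 0" "q < 1"
    and qd: "\<forall>d. (\<forall>l<N. d l \<le> 0) \<longrightarrow> (\<forall>x. norm (mexp (tstar N d \<Theta>) *v x) \<le> q ^ (\<Sum>l<N. nat (- d l)) * norm x)"
    using decayN[OF pd cm] by blast
  have [measurable]: "Y t \<in> borel_measurable P" using t by (rule Y_meas)
  define A where "A n = {\<omega>\<in>space P. real n < norm (Y t \<omega>)}" for n :: nat
  have "(\<lambda>n. measure P (A n)) \<longlonglongrightarrow> measure P (\<Inter>n. A n)"
    by (rule finite_Lim_measure_decseq) (auto simp: A_def decseq_def)
  moreover have "(\<Inter>n. A n) = {}"
  proof -
    have "\<exists>n. \<omega> \<notin> A n" for \<omega>
    proof -
      obtain n :: nat where "norm (Y t \<omega>) < real n" using reals_Archimedean2 by blast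
      then show ?thesis by (auto simp: A_def intro!: exI[of _ n])
    qed
    then show ?thesis by blast
  qed
  ultimately have "(\<lambda>n. measure P (A n)) \<longlonglongrightarrow> 0" by simp
  then obtain n0 where n0: "measure P (A n0) < \<delta>"
    using \<delta> by (metis order_tendstoD(2) eventually_sequentially order_refl)
  have "(\<lambda>k. q ^ k * real n0) \<longlonglongrightarrow> 0"
    by (intro tendsto_mult_left_zero LIMSEQ_power_zero) (use q in auto)
  then obtain k where k: "q ^ k * real n0 < e / 2"
    using e by (metis order_tendstoD(2) eventually_sequentially order_refl half_gt_zero)
  show ?thesis
  proof (intro exI ballI impI)
    fix s assume s: "s \<in> ZN N" and le: "\<forall>l<N. s l \<le> t l" and ex: "\<exists>l<N. s l \<le> t l - int k"
    define ee where "ee = (\<Sum>l<N. nat (t l - s l))"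
    have kee: "k \<le> ee"
    proof -
      obtain l where l: "l < N" "s l \<le> t l - int k" using ex by blast
      then have "k \<le> nat (t l - s l)" by simp
      also have "\<dots> \<le> ee" unfolding ee_def using l(1) by (intro member_le_sum) auto
      finally show ?thesis .
    qed
    have qk: "q ^ ee \<le> q ^ k" using q kee by (intro power_decreasing) auto
    have "measure P {\<omega>\<in>space P. e < norm (Y s \<omega>)} \<le> measure P {\<omega>\<in>space P. e/2 < q ^ ee * norm (Y t \<omega>)}"
      unfolding ee_def by (rule claim1[OF s t le e q qd])
    also have "\<dots> \<le> measure P (A n0)"
    proof (rule finite_measure_mono)
      show "{\<omega>\<in>space P. e/2 < q ^ ee * norm (Y t \<omega>)} \<subseteq> A n0"
      proof
        fix \<omega> assume w: "\<omega> \<in> {\<omega>\<in>space P. e/2 < q ^ ee * norm (Y t \<omega>)}"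
        show "\<omega> \<in> A n0"
        proof (rule ccontr)
          assume "\<omega> \<notin> A n0"
          then have "norm (Y t \<omega>) \<le> real n0" using w by (auto simp: A_def)
          then have "q ^ ee * norm (Y t \<omega>) \<le> q ^ k * real n0"
            using qk q by (intro mult_mono) auto
          then show False using w k by auto
        qed
      qed
      show "A n0 \<in> sets P" by (simp add: A_def)
    qed
    finally show "measure P {\<omega>\<in>space P. e < norm (Y s \<omega>)} \<le> \<delta>" using n0 by simp
  qed
qed

end


definition corner :: "(nat \<Rightarrow> int) \<Rightarrow> (nat \<Rightarrow> int) \<Rightarrow> nat set \<Rightarrow> nat \<Rightarrow> int" where
  "corner t M K = (\<lambda>l. if l \<in> K then min (t l) (- M l - 1) else t l)"

lemma corner_ZN: "t \<in> ZN N \<Longrightarrow> K \<subseteq> {..<N} \<Longrightarrow> corner t M K \<in> ZN N"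
  by (auto simp: corner_def ZN_def)

lemma prod_ind: "finite K \<Longrightarrow> (\<Prod>l\<in>K. (if P l then 1 else 0::real)) = (if \<forall>l\<in>K. P l then 1 else 0)"
  by (induction K rule: finite_induct) auto

lemma incl_excl_coeff:
  fixes a :: "nat \<Rightarrow> bool"
  shows "(\<Sum>K\<in>Pow {..<N}. (-1::real)^card K * (if \<forall>l\<in>K. a l then 1 else 0))
        = (if \<forall>l<N. \<not> a l then 1 else 0)"
proof -
  have "(\<Sum>K\<in>Pow {..<N}. (-1::real)^card K * (if \<forall>l\<in>K. a l then 1 else 0))
      = (\<Sum>K\<in>Pow {..<N}. (\<Prod>l\<in>K. - (if a l then 1 else 0)) * (\<Prod>l\<in>{..<N} - K. 1::real))"
  proof (rule sum.cong[OF refl])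
    fix K assume K: "K \<in> Pow {..<N}"
    then have fK: "finite K" by (auto intro: finite_subset)
    have "(\<Prod>l\<in>K. - (if a l then 1 else 0::real)) = (\<Prod>l\<in>K. (-1) * (if a l then 1 else 0::real))" by simp
    also have "\<dots> = (\<Prod>l\<in>K. (-1::real)) * (\<Prod>l\<in>K. (if a l then 1 else 0::real))"
      by (rule prod.distrib)
    also have "\<dots> = (-1)^card K * (\<Prod>l\<in>K. (if a l then 1 else 0::real))"
      by (simp only: prod_constant)
    also have "\<dots> = (-1)^card K * (if \<forall>l\<in>K. a l then 1 else 0)" by (simp add: prod_ind[OF fK])
    finally show "(-1::real)^card K * (if \<forall>l\<in>K. a l then 1 else 0) = (\<Prod>l\<in>K. - (if a l then 1 else 0)) * (\<Prod>l\<in>{..<N} - K. 1::real)"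
      by simp
  qed
  also have "\<dots> = (\<Prod>l<N. - (if a l then 1 else 0) + 1::real)"
    by (rule prod_add[symmetric]) simp
  also have "\<dots> = (\<Prod>l<N. (if \<not> a l then 1 else 0::real))" by (intro prod.cong) auto
  also have "\<dots> = (if \<forall>l<N. \<not> a l then 1 else 0)" by (simp add: prod_ind)
  finally show ?thesis .
qed

lemma FI:
  fixes f :: "(nat \<Rightarrow> int) \<Rightarrow> 'b::real_vector"
  assumes MM: "\<forall>l<N. M l \<le> M' l"
  shows "(\<Sum>K\<in>Pow {..<N}. ((-1::real)^card K) *\<^sub>R (\<Sum>j\<in>box N (corner t M K) M'. f j)) = (\<Sum>j\<in>box N t M. f j)"
proof -
  define B0 where "B0 = box N t M'"
  have fB0: "finite B0" by (simp add: B0_def finite_box)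
  have sub: "box N (corner t M K) M' \<subseteq> B0" for K
    by (auto simp: B0_def box_def corner_def)
  have subt: "box N t M \<subseteq> B0" using MM by (force simp: B0_def box_def)
  have ind: "j \<in> box N (corner t M K) M' \<longleftrightarrow> (\<forall>l\<in>K. j l \<le> - M l - 1)"
    if "j \<in> B0" "K \<subseteq> {..<N}" for j K
    using that by (auto simp: B0_def box_def corner_def)
  have indt: "j \<in> box N t M \<longleftrightarrow> (\<forall>l<N. \<not> j l \<le> - M l - 1)" if "j \<in> B0" for j
    using that by (auto simp: B0_def box_def)
  have "(\<Sum>K\<in>Pow {..<N}. ((-1::real)^card K) *\<^sub>R (\<Sum>j\<in>box N (corner t M K) M'. f j))
     = (\<Sum>K\<in>Pow {..<N}. ((-1::real)^card K) *\<^sub>R (\<Sum>j\<in>B0. (if j \<in> box N (corner t M K) M' then 1 else 0::real) *\<^sub>R f j))"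
    by (intro sum.cong refl arg_cong[where f="\<lambda>x. _ *\<^sub>R x"] sum.mono_neutral_cong_left fB0 sub) auto
  also have "\<dots> = (\<Sum>j\<in>B0. (\<Sum>K\<in>Pow {..<N}. (-1::real)^card K * (if j \<in> box N (corner t M K) M' then 1 else 0)) *\<^sub>R f j)"
    by (simp add: scaleR_sum_right scaleR_sum_left sum.swap[of _ "Pow {..<N}"])
  also have "\<dots> = (\<Sum>j\<in>B0. (if j \<in> box N t M then 1 else 0::real) *\<^sub>R f j)"
  proof (rule sum.cong[OF refl])
    fix j assume j: "j \<in> B0"
    have "(\<Sum>K\<in>Pow {..<N}. (-1::real)^card K * (if j \<in> box N (corner t M K) M' then 1 else 0))
        = (\<Sum>K\<in>Pow {..<N}. (-1::real)^card K * (if \<forall>l\<in>K. j l \<le> - M l - 1 then 1 else 0))"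
      using ind[OF j] by (intro sum.cong refl) auto
    also have "\<dots> = (if \<forall>l<N. \<not> j l \<le> - M l - 1 then 1 else 0)" by (rule incl_excl_coeff)
    also have "\<dots> = (if j \<in> box N t M then 1 else 0)" using indt[OF j] by simp
    finally show "(\<Sum>K\<in>Pow {..<N}. (-1::real)^card K * (if j \<in> box N (corner t M K) M' then 1 else 0)) *\<^sub>R f j
       = (if j \<in> box N t M then 1 else 0::real) *\<^sub>R f j" by simp
  qed
  also have "\<dots> = (\<Sum>j\<in>box N t M. f j)"
    by (rule sum.mono_neutral_cong_right[OF fB0 subt]) auto
  finally show ?thesis .
qed

lemma tendsto0I:
  fixes f :: "'i \<Rightarrow> real"
  assumes "\<And>\<delta>. \<delta> > 0 \<Longrightarrow> eventually (\<lambda>x. f x \<le> \<delta>) F" "\<And>x. 0 \<le> f x"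
  shows "(f \<longlongrightarrow> 0) F"
proof (rule order_tendstoI)
  fix a :: real assume "a < 0"
  then show "eventually (\<lambda>x. a < f x) F" using assms(2) by (auto intro: always_eventually less_le_trans)
next
  fix a :: real assume "0 < a"
  then have "a/2 > 0" by simp
  then have "eventually (\<lambda>x. f x \<le> a/2) F" by (rule assms(1))
  then show "eventually (\<lambda>x. f x < a) F" by (rule eventually_mono) (use \<open>0 < a\<close> in simp)
qed

lemma (in prob_space) conv_transfer:
  fixes X X' :: "'i \<Rightarrow> 'a \<Rightarrow> real^'n"
  assumes c: "conv_prob M X Z F" and m: "\<And>x. X' x \<in> borel_measurable M"
    and ae: "\<And>x e. e > 0 \<Longrightarrow> measure M {\<omega>\<in>space M. e < dist (X' x \<omega>) (X x \<omega>)} = 0"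
  shows "conv_prob M X' Z F"
  unfolding conv_prob_def
proof (intro conjI allI impI m)
  have [measurable]: "X x \<in> borel_measurable M" for x using c by (simp add: conv_prob_def)
  show Zm[measurable]: "Z \<in> borel_measurable M" using c by (simp add: conv_prob_def)
  fix e :: real assume e: "e > 0"
  have m'[measurable]: "X' x \<in> borel_measurable M" for x by (rule m)
  show "((\<lambda>x. measure M {\<omega>\<in>space M. e < dist (X' x \<omega>) (Z \<omega>)}) \<longlongrightarrow> 0) F"
  proof (rule tendsto0I)
    fix \<delta> :: real assume \<delta>: "\<delta> > 0"
    have "((\<lambda>x. measure M {\<omega>\<in>space M. e/2 < dist (X x \<omega>) (Z \<omega>)}) \<longlongrightarrow> 0) F"
    proof -
      have C: "\<forall>\<epsilon>>0. ((\<lambda>x. measure M {\<omega>\<in>space M. \<epsilon> < dist (X x \<omega>) (Z \<omega>)}) \<longlongrightarrow> 0) F"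
        using c unfolding conv_prob_def by blast
      have "e/2 > 0" using e by simp
      with C show ?thesis by blast
    qed
    then have "eventually (\<lambda>x. measure M {\<omega>\<in>space M. e/2 < dist (X x \<omega>) (Z \<omega>)} < \<delta>) F"
      using \<delta> by (rule order_tendstoD)
    then show "eventually (\<lambda>x. measure M {\<omega>\<in>space M. e < dist (X' x \<omega>) (Z \<omega>)} \<le> \<delta>) F"
    proof (rule eventually_mono)
      fix x assume x: "measure M {\<omega>\<in>space M. e/2 < dist (X x \<omega>) (Z \<omega>)} < \<delta>"
      have "measure M {\<omega>\<in>space M. e/2 + e/2 < dist (X' x \<omega>) (Z \<omega>)}
          \<le> measure M {\<omega>\<in>space M. e/2 < dist (X' x \<omega>) (X x \<omega>)} + measure M {\<omega>\<in>space M. e/2 < dist (X x \<omega>) (Z \<omega>)}"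
        by (rule split_dist) auto
      then show "measure M {\<omega>\<in>space M. e < dist (X' x \<omega>) (Z \<omega>)} \<le> \<delta>" using x ae[of "e/2" x] e by simp
    qed
  qed simp
qed

context mt
begin

definition V :: "(nat \<Rightarrow> int) \<Rightarrow> nat set \<Rightarrow> (nat \<Rightarrow> int) \<Rightarrow> 'a \<Rightarrow> real^'n" where
  "V t L M \<omega> = (\<Sum>K\<in>Pow ({..<N} - L). ((-1::real)^card K) *\<^sub>R Y (corner t M K) \<omega>)"

lemma V_meas[measurable]: "t \<in> ZN N \<Longrightarrow> V t L M \<in> borel_measurable P"
  unfolding V_def[abs_def]
  by (intro borel_measurable_sum borel_measurable_scaleR borel_measurable_const Y_meas corner_ZN) auto

lemma V_all: "V t {..<N} M = Y t"
proof -
  have "corner t M {} = t" by (simp add: corner_def)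
  then show ?thesis by (intro ext) (simp add: V_def)
qed

lemma AE:
  assumes t: "t \<in> ZN N" and e: "e > 0"
  shows "measure P {\<omega>\<in>space P. e < dist (psum N \<Theta> G t M \<omega>) (V t {} M \<omega>)} = 0"
proof -
  define F where "F = Pow {..<N}"
  define n where "n = card F"
  have fF: "finite F" and nF: "F \<noteq> {}" by (auto simp: F_def)
  have n0: "real n > 0" using fF nF by (simp add: n_def card_gt_0_iff)
  have cZ: "K \<in> F \<Longrightarrow> corner t M K \<in> ZN N" for K using t by (intro corner_ZN) (auto simp: F_def)
  have [measurable]: "psum N \<Theta> G t M \<in> borel_measurable P" using t by (rule psum_meas)
  have [measurable]: "V t {} M \<in> borel_measurable P" using t by (rule V_meas)
  have "measure P {\<omega>\<in>space P. e < dist (psum N \<Theta> G t M \<omega>) (V t {} M \<omega>)} \<le> 0"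
  proof (rule field_le_epsilon)
    fix \<delta> :: real assume \<delta>: "\<delta> > 0"
    have "nev (rev [0..<N]) (\<lambda>M'. (\<forall>K\<in>F. measure P {\<omega>\<in>space P. e / real n < dist (psum N \<Theta> G (corner t M K) M' \<omega>) (Y (corner t M K) \<omega>)} < \<delta> / real n)
        \<and> (\<forall>l\<in>set (rev [0..<N]). M l \<le> M' l))"
      using e \<delta> n0 cZ by (intro nev_conj nev_ball fF nevY nev_ge) auto
    then obtain M' where M': "\<forall>K\<in>F. measure P {\<omega>\<in>space P. e / real n < dist (psum N \<Theta> G (corner t M K) M' \<omega>) (Y (corner t M K) \<omega>)} < \<delta> / real n"
        "\<forall>l<N. M l \<le> M' l"
      using nev_ex by fastforce
    have rep: "psum N \<Theta> G t M \<omega> = (\<Sum>K\<in>F. ((-1::real)^card K) *\<^sub>R psum N \<Theta> G (corner t M K) M' \<omega>)" for \<omega>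
      unfolding psum_def F_def using FI[OF M'(2), where t=t and f="\<lambda>j. mexp (tstar N j \<Theta>) *v incr N G j \<omega>"] by simp
    have rep2: "V t {} M \<omega> = (\<Sum>K\<in>F. ((-1::real)^card K) *\<^sub>R Y (corner t M K) \<omega>)" for \<omega>
      by (simp add: V_def F_def)
    have le: "dist (psum N \<Theta> G t M \<omega>) (V t {} M \<omega>) \<le> (\<Sum>K\<in>F. dist (psum N \<Theta> G (corner t M K) M' \<omega>) (Y (corner t M K) \<omega>))" for \<omega>
    proof -
      have "dist (psum N \<Theta> G t M \<omega>) (V t {} M \<omega>) = norm (\<Sum>K\<in>F. ((-1::real)^card K) *\<^sub>R (psum N \<Theta> G (corner t M K) M' \<omega> - Y (corner t M K) \<omega>))"
        by (simp add: rep rep2 dist_norm sum_subtractf scaleR_diff_right)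
      also have "\<dots> \<le> (\<Sum>K\<in>F. norm (((-1::real)^card K) *\<^sub>R (psum N \<Theta> G (corner t M K) M' \<omega> - Y (corner t M K) \<omega>)))"
        by (rule norm_sum)
      also have "\<dots> = (\<Sum>K\<in>F. dist (psum N \<Theta> G (corner t M K) M' \<omega>) (Y (corner t M K) \<omega>))"
        by (simp add: dist_norm)
      finally show ?thesis .
    qed
    have mK[measurable]: "K \<in> F \<Longrightarrow> (\<lambda>\<omega>. dist (psum N \<Theta> G (corner t M K) M' \<omega>) (Y (corner t M K) \<omega>)) \<in> borel_measurable P" for K
      using cZ by (intro borel_measurable_dist psum_meas Y_meas) auto
    have "measure P {\<omega>\<in>space P. e < dist (psum N \<Theta> G t M \<omega>) (V t {} M \<omega>)}
        \<le> measure P {\<omega>\<in>space P. e < (\<Sum>K\<in>F. dist (psum N \<Theta> G (corner t M K) M' \<omega>) (Y (corner t M K) \<omega>))}"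
      using le by (intro finite_measure_mono) (auto intro: less_le_trans borel_measurable_sum)
    also have "\<dots> \<le> (\<Sum>K\<in>F. measure P {\<omega>\<in>space P. e / real (card F) < dist (psum N \<Theta> G (corner t M K) M' \<omega>) (Y (corner t M K) \<omega>)})"
      by (rule split_sum[OF fF nF mK])
    also have "\<dots> \<le> (\<Sum>K\<in>F. \<delta> / real n)"
      using M'(1) by (intro sum_mono) (auto simp: n_def less_imp_le)
    also have "\<dots> = \<delta>" using n0 by (simp add: n_def)
    finally show "measure P {\<omega>\<in>space P. e < dist (psum N \<Theta> G t M \<omega>) (V t {} M \<omega>)} \<le> 0 + \<delta>" by simp
  qed
  then show ?thesis using measure_nonneg[of P] by (meson antisym)
qed

lemma norm_sum_bound:
  assumes fF: "finite F" and nF: "F \<noteq> {}"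
    and mK: "\<And>K. K \<in> F \<Longrightarrow> (\<lambda>\<omega>. norm (Z K \<omega>)) \<in> borel_measurable P"
    and mX: "X \<in> borel_measurable P"
    and le: "\<And>\<omega>. norm (X \<omega>) \<le> (\<Sum>K\<in>F. norm (Z K \<omega>))"
    and b: "\<And>K. K \<in> F \<Longrightarrow> measure P {\<omega>\<in>space P. e / real (card F) < norm (Z K \<omega>)} \<le> \<delta> / real (card F)"
  shows "measure P {\<omega>\<in>space P. e < norm ((X \<omega>)::real^'n)} \<le> \<delta>"
proof -
  have n0: "real (card F) > 0" using fF nF by (simp add: card_gt_0_iff)
  have [measurable]: "(\<lambda>\<omega>. norm (X \<omega>)) \<in> borel_measurable P" using mX by measurable
  have "measure P {\<omega>\<in>space P. e < norm (X \<omega>)} \<le> measure P {\<omega>\<in>space P. e < (\<Sum>K\<in>F. norm (Z K \<omega>))}"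
    using le mK by (intro finite_measure_mono) (auto intro: less_le_trans borel_measurable_sum)
  also have "\<dots> \<le> (\<Sum>K\<in>F. measure P {\<omega>\<in>space P. e / real (card F) < norm (Z K \<omega>)})"
    by (rule split_sum[OF fF nF mK])
  also have "\<dots> \<le> (\<Sum>K\<in>F. \<delta> / real (card F))" using b by (intro sum_mono) auto
  also have "\<dots> = \<delta>" using n0 by simp
  finally show ?thesis .
qed

lemma convA:
  assumes t: "t \<in> ZN N" and L: "L \<subseteq> {..<N}" and l: "l < N" "l \<notin> L"
  shows "conv_prob P (\<lambda>m. V t L (M(l := m))) (V t (insert l L) M) at_top"
  unfolding conv_prob_def
proof (intro conjI allI impI)
  show "V t L (M(l := m)) \<in> borel_measurable P" for m using t by (rule V_meas)
  show [measurable]: "V t (insert l L) M \<in> borel_measurable P" using t by (rule V_meas)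
  fix e :: real assume e: "e > 0"
  define J where "J = {..<N} - insert l L"
  have fJ: "finite (Pow J)" by (simp add: J_def)
  have lJ: "l \<notin> J" by (simp add: J_def)
  have IL: "{..<N} - L = insert l J" using l by (auto simp: J_def)
  have disj: "Pow J \<inter> insert l ` Pow J = {}" using lJ by auto
  have injl: "inj_on (insert l) (Pow J)"
    by (rule inj_onI) (use lJ in \<open>auto simp: insert_ident\<close>)
  define W where "W m \<omega> = (\<Sum>K\<in>Pow J. ((-1::real)^card (insert l K)) *\<^sub>R Y (corner t (M(l := m)) (insert l K)) \<omega>)" for m \<omega>
  have cZ: "K \<in> Pow J \<Longrightarrow> corner t M' (insert l K) \<in> ZN N" for K M' using t l by (intro corner_ZN) (auto simp: J_def)
  have decomp: "V t L (M(l := m)) \<omega> - V t (insert l L) M \<omega> = W m \<omega>" for m \<omega>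
  proof -
    have cK: "corner t (M(l := m)) K = corner t M K" if "K \<in> Pow J" for K
      using that lJ by (auto simp: corner_def fun_eq_iff)
    have "V t L (M(l := m)) \<omega> = (\<Sum>K\<in>Pow J \<union> insert l ` Pow J. ((-1::real)^card K) *\<^sub>R Y (corner t (M(l := m)) K) \<omega>)"
      by (simp add: V_def IL Pow_insert)
    also have "\<dots> = (\<Sum>K\<in>Pow J. ((-1::real)^card K) *\<^sub>R Y (corner t (M(l := m)) K) \<omega>)
                  + (\<Sum>K\<in>insert l ` Pow J. ((-1::real)^card K) *\<^sub>R Y (corner t (M(l := m)) K) \<omega>)"
      using fJ disj by (intro sum.union_disjoint) auto
    also have "(\<Sum>K\<in>Pow J. ((-1::real)^card K) *\<^sub>R Y (corner t (M(l := m)) K) \<omega>) = V t (insert l L) M \<omega>"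
      unfolding V_def J_def[symmetric] using cK by (intro sum.cong) auto
    also have "(\<Sum>K\<in>insert l ` Pow J. ((-1::real)^card K) *\<^sub>R Y (corner t (M(l := m)) K) \<omega>) = W m \<omega>"
      unfolding W_def by (rule sum.reindex[OF injl, unfolded comp_def])
    finally show ?thesis by (simp only: diff_eq_eq add.commute)
  qed
  show "((\<lambda>m. measure P {\<omega>\<in>space P. e < dist (V t L (M(l := m)) \<omega>) (V t (insert l L) M \<omega>)}) \<longlongrightarrow> 0) at_top"
  proof (rule tendsto0I)
    fix \<delta> :: real assume \<delta>: "\<delta> > 0"
    define n where "n = real (card (Pow J))"
    have "{} \<in> Pow J" by simp
    then have n0: "n > 0" using fJ unfolding n_def by (auto simp: card_gt_0_iff)
    obtain k where k: "\<forall>s\<in>ZN N. (\<forall>l<N. s l \<le> t l) \<longrightarrow> (\<exists>l<N. s l \<le> t l - int k) \<longrightarrow>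
        measure P {\<omega>\<in>space P. e / n < norm (Y s \<omega>)} \<le> \<delta> / n"
      using UD[OF t, of "e / n" "\<delta> / n"] e \<delta> n0 by auto
    show "eventually (\<lambda>m. measure P {\<omega>\<in>space P. e < dist (V t L (M(l := m)) \<omega>) (V t (insert l L) M \<omega>)} \<le> \<delta>) at_top"
    proof (rule eventually_mono[OF eventually_ge_at_top[of "int k - t l"]])
      fix m assume m: "int k - t l \<le> m"
      have "measure P {\<omega>\<in>space P. e < norm (W m \<omega>)} \<le> \<delta>"
      proof (rule norm_sum_bound[where Z="\<lambda>K \<omega>. Y (corner t (M(l := m)) (insert l K)) \<omega>"])
        show "finite (Pow J)" "Pow J \<noteq> {}" by (auto simp: J_def)
        show "W m \<in> borel_measurable P" unfolding W_def[abs_def]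
          using cZ by (intro borel_measurable_sum borel_measurable_scaleR borel_measurable_const Y_meas) auto
        show "(\<lambda>\<omega>. norm (Y (corner t (M(l := m)) (insert l K)) \<omega>)) \<in> borel_measurable P" if "K \<in> Pow J" for K
          using Y_meas[OF cZ[OF that]] by measurable
        show "norm (W m \<omega>) \<le> (\<Sum>K\<in>Pow J. norm (Y (corner t (M(l := m)) (insert l K)) \<omega>))" for \<omega>
          unfolding W_def by (rule order_trans[OF norm_sum]) simp
        show "measure P {\<omega>\<in>space P. e / real (card (Pow J)) < norm (Y (corner t (M(l := m)) (insert l K)) \<omega>)}
            \<le> \<delta> / real (card (Pow J))" if "K \<in> Pow J" for K
        proof -
          have a: "\<forall>l'<N. corner t (M(l := m)) (insert l K) l' \<le> t l'" by (simp add: corner_def)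
          have b: "\<exists>l'<N. corner t (M(l := m)) (insert l K) l' \<le> t l' - int k"
            using l m by (intro exI[of _ l]) (auto simp: corner_def)
          show ?thesis using mp[OF mp[OF bspec[OF k cZ[OF that]] a] b] by (simp add: n_def)
        qed
      qed
      then show "measure P {\<omega>\<in>space P. e < dist (V t L (M(l := m)) \<omega>) (V t (insert l L) M \<omega>)} \<le> \<delta>"
        by (simp add: dist_norm decomp)
    qed
  qed simp
qed

lemma ilimV:
  assumes t: "t \<in> ZN N"
  shows "distinct ls \<Longrightarrow> set ls \<inter> L = {} \<Longrightarrow> set ls \<union> L = {..<N} \<Longrightarrow> ilim P ls (V t L) (Y t)"
proof (induction ls arbitrary: L)
  case Nil
  then have "L = {..<N}" by simp
  then show ?case by (simp add: V_all)
next
  case (Cons l ls)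
  have L: "L \<subseteq> {..<N}" "l < N" "l \<notin> L" using Cons.prems by auto
  have "ilim P ls (V t (insert l L)) (Y t)"
    using Cons.prems by (intro Cons.IH) auto
  moreover have "\<forall>M. conv_prob P (\<lambda>m. V t L (M(l := m))) (V t (insert l L) M) at_top"
    using convA[OF t L] by blast
  ultimately show ?case by auto
qed

lemma joint:
  assumes t: "t \<in> ZN N"
  shows "conv_prob P (psum N \<Theta> G t) (Y t) (joint_at_top N)"
  unfolding conv_prob_def
proof (intro conjI allI impI)
  show "psum N \<Theta> G t M \<in> borel_measurable P" for M using t by (rule psum_meas)
  show [measurable]: "Y t \<in> borel_measurable P" using t by (rule Y_meas)
  have [measurable]: "psum N \<Theta> G t M \<in> borel_measurable P" "V t {} M \<in> borel_measurable P" for M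
    using t by (auto intro: psum_meas V_meas)
  fix e :: real assume e: "e > 0"
  show "((\<lambda>M. measure P {\<omega>\<in>space P. e < dist (psum N \<Theta> G t M \<omega>) (Y t \<omega>)}) \<longlongrightarrow> 0) (joint_at_top N)"
  proof (rule tendsto0I)
    fix \<delta> :: real assume \<delta>: "\<delta> > 0"
    define F where "F = Pow {..<N} - {{}}"
    have fF: "finite F" by (simp add: F_def)
    have VY: "V t {} M \<omega> - Y t \<omega> = (\<Sum>K\<in>F. ((-1::real)^card K) *\<^sub>R Y (corner t M K) \<omega>)" for M \<omega>
    proof -
      have "corner t M {} = t" by (simp add: corner_def)
      then show ?thesis unfolding V_def F_def
        by (subst sum.remove[of _ "{}"]) auto
    qed
    have cZ: "K \<in> F \<Longrightarrow> corner t M K \<in> ZN N" for K M using t by (intro corner_ZN) (auto simp: F_def)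
    have key: "\<exists>K0. \<forall>M. (\<forall>l<N. K0 \<le> M l) \<longrightarrow> measure P {\<omega>\<in>space P. e/2 < norm (V t {} M \<omega> - Y t \<omega>)} \<le> \<delta>"
    proof (cases "F = {}")
      case True
      then have "V t {} M \<omega> - Y t \<omega> = 0" for M \<omega> using VY by simp
      then show ?thesis using e \<delta> by (intro exI[of _ 0] allI impI) simp
    next
      case False
      define n where "n = real (card F)"
      have n0: "n > 0" using fF False by (simp add: n_def card_gt_0_iff)
      obtain k where k: "\<forall>s\<in>ZN N. (\<forall>l<N. s l \<le> t l) \<longrightarrow> (\<exists>l<N. s l \<le> t l - int k) \<longrightarrow>
          measure P {\<omega>\<in>space P. (e/2) / n < norm (Y s \<omega>)} \<le> \<delta> / n"
        using UD[OF t, of "(e/2) / n" "\<delta> / n"] e \<delta> n0 by auto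
      show ?thesis
      proof (intro exI allI impI)
        fix M assume M: "\<forall>l<N. int k + (\<Sum>l<N. \<bar>t l\<bar>) \<le> M l"
        show "measure P {\<omega>\<in>space P. e/2 < norm (V t {} M \<omega> - Y t \<omega>)} \<le> \<delta>"
        proof (rule norm_sum_bound[where Z="\<lambda>K \<omega>. Y (corner t M K) \<omega>" and F=F])
          show "finite F" "F \<noteq> {}" by (fact fF) (fact False)
          show "(\<lambda>\<omega>. V t {} M \<omega> - Y t \<omega>) \<in> borel_measurable P" by measurable
          show "(\<lambda>\<omega>. norm (Y (corner t M K) \<omega>)) \<in> borel_measurable P" if "K \<in> F" for K
            using Y_meas[OF cZ[OF that]] by measurable
          show "norm (V t {} M \<omega> - Y t \<omega>) \<le> (\<Sum>K\<in>F. norm (Y (corner t M K) \<omega>))" for \<omega>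
            unfolding VY by (rule order_trans[OF norm_sum]) simp
          show "measure P {\<omega>\<in>space P. e/2 / real (card F) < norm (Y (corner t M K) \<omega>)} \<le> \<delta> / real (card F)"
            if K: "K \<in> F" for K
          proof -
            have a: "\<forall>l'<N. corner t M K l' \<le> t l'" by (simp add: corner_def)
            obtain l where lK: "l \<in> K" using K by (auto simp: F_def)
            have lN: "l < N" using lK K by (auto simp: F_def)
            have "\<bar>t l\<bar> \<le> (\<Sum>l<N. \<bar>t l\<bar>)" using lN by (intro member_le_sum) auto
            then have "corner t M K l \<le> t l - int k" using M lN lK by (auto simp: corner_def)
            then have "\<exists>l'<N. corner t M K l' \<le> t l' - int k" using lN by blast
            then show ?thesis using mp[OF mp[OF bspec[OF k cZ[OF K]] a]] by (simp add: n_def)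
          qed
        qed
      qed
    qed
    then obtain K0 where K0: "\<And>M. \<forall>l<N. K0 \<le> M l \<Longrightarrow> measure P {\<omega>\<in>space P. e/2 < norm (V t {} M \<omega> - Y t \<omega>)} \<le> \<delta>"
      by blast
    have ev: "eventually (\<lambda>M. \<forall>l<N. K0 \<le> M l) (joint_at_top N)"
      unfolding joint_at_top_def
    proof (subst eventually_INF_base)
      show "(UNIV::int set) \<noteq> {}" by simp
      show "\<exists>x\<in>UNIV. principal {M. \<forall>l<N. x \<le> M l} \<le> inf (principal {M. \<forall>l<N. a \<le> M l}) (principal {M. \<forall>l<N. b \<le> M l})"
        for a b :: int
        by (intro bexI[of _ "max a b"]) auto
      show "\<exists>b\<in>UNIV. eventually (\<lambda>M. \<forall>l<N. K0 \<le> M l) (principal {M. \<forall>l<N. b \<le> M l})"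
        by (intro bexI[of _ K0]) (auto simp: eventually_principal)
    qed
    show "eventually (\<lambda>M. measure P {\<omega>\<in>space P. e < dist (psum N \<Theta> G t M \<omega>) (Y t \<omega>)} \<le> \<delta>) (joint_at_top N)"
    proof (rule eventually_mono[OF ev])
      fix M assume M: "\<forall>l<N. K0 \<le> M l"
      have "measure P {\<omega>\<in>space P. e/2 + e/2 < dist (psum N \<Theta> G t M \<omega>) (Y t \<omega>)}
          \<le> measure P {\<omega>\<in>space P. e/2 < dist (psum N \<Theta> G t M \<omega>) (V t {} M \<omega>)} + measure P {\<omega>\<in>space P. e/2 < dist (V t {} M \<omega>) (Y t \<omega>)}"
        by (rule split_dist) auto
      also have "\<dots> \<le> 0 + \<delta>"
        using AE[OF t, of "e/2" M] e K0[OF M] by (simp add: dist_norm)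
      finally show "measure P {\<omega>\<in>space P. e < dist (psum N \<Theta> G t M \<omega>) (Y t \<omega>)} \<le> \<delta>" by simp
    qed
  qed simp
qed

lemma main:
  assumes t: "t \<in> ZN N"
  shows "(\<forall>ls. distinct ls \<and> set ls = {..<N} \<longrightarrow> ilim P ls (psum N \<Theta> G t) (Y t)) \<and>
         conv_prob P (psum N \<Theta> G t) (Y t) (joint_at_top N)"
proof (intro conjI allI impI joint[OF t])
  fix ls assume ls: "distinct ls \<and> set ls = {..<N}"
  show "ilim P ls (psum N \<Theta> G t) (Y t)"
  proof (cases ls)
    case Nil
    then have "(0::nat) \<notin> {..<N}" using ls by simp
    then have "N = 0" by simp
    then show ?thesis using hY t Nil by simp
  next
    case (Cons l ls')
    have lN: "l < N" using ls Cons by auto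
    have "ilim P ls' (V t {l}) (Y t)"
      using ls Cons by (intro ilimV[OF t]) auto
    moreover have "conv_prob P (\<lambda>m. psum N \<Theta> G t (M(l := m))) (V t {l} M) at_top" for M
    proof (rule conv_transfer)
      show "conv_prob P (\<lambda>m. V t {} (M(l := m))) (V t {l} M) at_top"
        using convA[OF t _ lN, of "{}" M] by simp
      show "psum N \<Theta> G t (M(l := m)) \<in> borel_measurable P" for m using t by (rule psum_meas)
      show "measure P {\<omega>\<in>space P. e < dist (psum N \<Theta> G t (M(l := m)) \<omega>) (V t {} (M(l := m)) \<omega>)} = 0"
        if "e > 0" for m e using AE[OF t that] .
    qed
    ultimately show ?thesis unfolding Cons by auto
  qed
qed

end



theorem mainTheorem6:
  fixes P :: "'a measure" and N :: nat and \<Theta> :: "nat \<Rightarrow> real^'n^'n"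
    and G :: "(nat \<Rightarrow> int) \<Rightarrow> 'a \<Rightarrow> real^'n" and Y :: "(nat \<Rightarrow> int) \<Rightarrow> 'a \<Rightarrow> real^'n"
  assumes "prob_space P"
    and "\<forall>l<N. sym_posdef (\<Theta> l)"
    and "\<forall>k<N. \<forall>l<N. \<Theta> k ** \<Theta> l = \<Theta> l ** \<Theta> k"
    and "G \<in> GTheta P N \<Theta>"
    and "\<forall>t\<in>ZN N. ilim P (rev [0..<N]) (psum N \<Theta> G t) (Y t)"
  shows "\<forall>t\<in>ZN N.
           (\<forall>ls. distinct ls \<and> set ls = {..<N} \<longrightarrow> ilim P ls (psum N \<Theta> G t) (Y t)) \<and>
           conv_prob P (psum N \<Theta> G t) (Y t) (joint_at_top N)"
proof -
  interpret mt P N \<Theta> G Y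
    by (rule mt.intro[OF assms(1)], unfold_locales) (use assms in auto)
  show ?thesis using main by blast
qed

end
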